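(* Let $(\mathbb{K},|\cdot|)$ be a valued field such that $\mathbb{K}$ is an ordered quadratically closed field, let $f(X)=\sum_{m\ge0}a_mX^m$ with $a_m\in\mathbb{K}$, and let $M\in\widehat{\Omega}_{f,\mathbb{K}}\setminus\{0\}$ be semisimple with splitting bound at most $2$ over $\mathbb{K}$, with normalized fine Frobenius decomposition $M=\sum_{i=0}^s\gamma_i\mathbf{A}_i(M)-\sum_{j=1}^t\mathbf{Re}(\lambda_j)\mathbf{B}_j(M)^2+\sum_{j=1}^t\mathbf{Im}(\lambda_j)\mathbf{B}_j(M)$, where the $\lambda_j$ are the eigenvalues of $M$ not in $\mathbb{K}$ having positive imaginary part. Then $f(M)=\sum_{i=0}^sf(\gamma_i)\mathbf{A}_i(M)-\sum_{j=1}^t\mathbf{Re}f(\lambda_j)\,\mathbf{B}_j(M)^2+\sum_{j=1}^t\mathbf{Im}f(\lambda_j)\,\mathbf{B}_j(M)$, with $f(\gamma_i),\mathbf{Re}f(\lambda_j),\mathbf{Im}f(\lambda_j)\in\mathbb{K}^c$ for all $i,j$.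
   Context: An ordered field is ordered quadratically closed if every positive element has a square root in it (characteristic is then $0$). A valued field has an absolute value $|\cdot|$, completion $\mathbb{K}^c$, and the absolute value extends uniquely to $\overline{\mathbb{K}^c}\supseteq\overline{\mathbb{K}}$ and its completion. Fix $\sqrt{-1}\in\overline{\mathbb{K}}$. For $\lambda\in\overline{\mathbb{K}}$ with monic minimal polynomial $X^d+b_{d-1}X^{d-1}+\cdots$ over $\mathbb{K}$, $H_\mathbb{K}(\lambda)=-b_{d-1}/d$, $V_\mathbb{K}(\lambda)=\lambda-H_\mathbb{K}(\lambda)$. For $\lambda$ of degree $2$, $\mathbf{Re}(\lambda),\mathbf{Im}(\lambda)\in\mathbb{K}$ are defined by $H_\mathbb{K}(\lambda)=\mathbf{Re}(\lambda)$, $V_\mathbb{K}(\lambda)=\sqrt{-1}\,\mathbf{Im}(\lambda)$; "positive imaginary part" means $\mathbf{Im}(\lambda)>0$ in $\mathbb{K}$. $R_f$ is the radius of convergence of $\sum|a_m|X^m$; $\widehat{\Omega}_{f,\mathbb{K}}$ is the set of $A\in M_n(\mathbb{K})$ with spectral radius $<R_f$ whose eigenvalues $\lambda$, with $\alpha=H_\mathbb{K}(\lambda)$, $\beta=V_\mathbb{K}(\lambda)$, satisfy $|\alpha|+|\beta|<R_f$ (archimedean case) or $\max(|\alpha|,|\beta|)<R_f$ (non-archimedean case). For such $\lambda$: $\mathbf{Re}f(\lambda)=\sum_{m\ge0}a_m\sum_{h=0}^{\lfloor m/2\rfloor}\binom{m}{2h}\alpha^{m-2h}\beta^{2h}$ and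 $\mathbf{Im}f(\lambda)=-\sqrt{-1}\sum_{m\ge1}a_m\sum_{h=1}^{\lfloor(m+1)/2\rfloor}\binom{m}{2h-1}\alpha^{m-2h+1}\beta^{2h-1}$ (so $f(\lambda)=\mathbf{Re}f(\lambda)+\sqrt{-1}\,\mathbf{Im}f(\lambda)$). The splitting bound over $\mathbb{K}$ of $M$ is the maximum degree of the irreducible factors over $\mathbb{K}$ of its minimal polynomial. Normalized fine Frobenius decomposition: $\gamma_1,\dots,\gamma_s$ are the distinct nonzero eigenvalues of $M$ in $\mathbb{K}$; with $C_\mu(M)=\prod_{\nu\ne\mu}\frac{M-\nu I_n}{\mu-\nu}$ the Frobenius covariant of the eigenvalue $\mu$ (product over the other distinct eigenvalues), $\mathbf{A}_i(M)=C_{\gamma_i}(M)$ for $1\le i\le s$, $\mathbf{B}_j(M)=\sqrt{-1}\,[C_{\lambda_j}(M)-C_{\overline{\lambda_j}}(M)]$ where $\overline{\lambda_j}=\mathbf{Re}(\lambda_j)-\sqrt{-1}\,\mathbf{Im}(\lambda_j)$, $\gamma_0=0$ and $\mathbf{A}_0(M)=I_n-\sum_{i=1}^s\mathbf{A}_i(M)+\sum_{j=1}^t\mathbf{B}_j(M)^2$; these matrices lie in $M_n(\mathbb{K})$. *)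

theory Defs
  imports "HOL-Analysis.Analysis" "HOL-Computational_Algebra.Polynomial"
    "HOL-Computational_Algebra.Polynomial_Factorial"
begin

definition is_absval :: "('a::field \<Rightarrow> real) \<Rightarrow> bool" where
  "is_absval av \<longleftrightarrow> (\<forall>x. 0 \<le> av x) \<and> (\<forall>x. av x = 0 \<longleftrightarrow> x = 0)
     \<and> (\<forall>x y. av (x * y) = av x * av y) \<and> (\<forall>x y. av (x + y) \<le> av x + av y)"

definition av_complete :: "('a::field \<Rightarrow> real) \<Rightarrow> bool" where
  "av_complete av \<longleftrightarrow> (\<forall>X::nat \<Rightarrow> 'a.
     (\<forall>e>0. \<exists>N. \<forall>m\<ge>N. \<forall>k\<ge>N. av (X m - X k) < e) \<longrightarrow>
     (\<exists>L. (\<lambda>k. av (X k - L)) \<longlonglongrightarrow> 0))"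

definition is_field_emb :: "('k::field \<Rightarrow> 'a::field) \<Rightarrow> bool" where
  "is_field_emb emb \<longleftrightarrow> emb 1 = 1 \<and> (\<forall>x y. emb (x + y) = emb x + emb y)
     \<and> (\<forall>x y. emb (x * y) = emb x * emb y)"

text \<open>The completion of K, realised as the closure of (the image of) K in the ambient field.\<close>
definition Kc :: "('k \<Rightarrow> 'a::field) \<Rightarrow> ('a \<Rightarrow> real) \<Rightarrow> 'a set" where
  "Kc emb av = {x. \<forall>e>0. \<exists>y. av (x - emb y) < e}"

definition nonarch :: "('k \<Rightarrow> 'a::field) \<Rightarrow> ('a \<Rightarrow> real) \<Rightarrow> bool" where
  "nonarch emb av \<longleftrightarrow> (\<forall>x y. av (emb x + emb y) \<le> max (av (emb x)) (av (emb y)))"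

definition ord_quad_closed :: "'k::linordered_field itself \<Rightarrow> bool" where
  "ord_quad_closed _ \<longleftrightarrow> (\<forall>x::'k. 0 < x \<longrightarrow> (\<exists>y. y * y = x))"

definition av_sums :: "('a::field \<Rightarrow> real) \<Rightarrow> (nat \<Rightarrow> 'a) \<Rightarrow> 'a \<Rightarrow> bool" where
  "av_sums av s L \<longleftrightarrow> (\<lambda>N. av ((\<Sum>m<N. s m) - L)) \<longlonglongrightarrow> 0"

definition av_summable :: "('a::field \<Rightarrow> real) \<Rightarrow> (nat \<Rightarrow> 'a) \<Rightarrow> bool" where
  "av_summable av s \<longleftrightarrow> (\<exists>L. av_sums av s L)"

definition av_suminf :: "('a::field \<Rightarrow> real) \<Rightarrow> (nat \<Rightarrow> 'a) \<Rightarrow> 'a" where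
  "av_suminf av s = (THE L. av_sums av s L)"

definition mat_av_sums :: "('a::field \<Rightarrow> real) \<Rightarrow> (nat \<Rightarrow> 'a^'n^'n) \<Rightarrow> 'a^'n^'n \<Rightarrow> bool" where
  "mat_av_sums av S L \<longleftrightarrow> (\<forall>i j. av_sums av (\<lambda>m. S m $ i $ j) (L $ i $ j))"

definition Rf :: "('k \<Rightarrow> 'a::field) \<Rightarrow> ('a \<Rightarrow> real) \<Rightarrow> (nat \<Rightarrow> 'k) \<Rightarrow> ereal" where
  "Rf emb av a = conv_radius (\<lambda>m. av (emb (a m)))"

definition smat :: "'a::semiring_1 \<Rightarrow> 'a^'n^'n \<Rightarrow> 'a^'n^'n" where
  "smat c A = (\<chi> i j. c * A $ i $ j)"

primrec mpow :: "'a::semiring_1^'n^'n \<Rightarrow> nat \<Rightarrow> 'a^'n^'n" where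
  "mpow A 0 = mat 1"
| "mpow A (Suc k) = A ** mpow A k"

definition mapM :: "('k \<Rightarrow> 'a) \<Rightarrow> 'k^'n^'n \<Rightarrow> 'a^'n^'n" where
  "mapM f A = (\<chi> i j. f (A $ i $ j))"

definition peval :: "'a::field poly \<Rightarrow> 'a^'n^'n \<Rightarrow> 'a^'n^'n" where
  "peval p A = (\<Sum>i\<le>degree p. smat (coeff p i) (mpow A i))"

definition minpoly :: "'k::field^'n^'n \<Rightarrow> 'k poly" where
  "minpoly M = (THE p. lead_coeff p = 1 \<and> peval p M = 0 \<and>
      (\<forall>q. q \<noteq> 0 \<longrightarrow> peval q M = 0 \<longrightarrow> degree p \<le> degree q))"

definition splitting_bound_le :: "'k::field^'n^'n \<Rightarrow> nat \<Rightarrow> bool" where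
  "splitting_bound_le M b \<longleftrightarrow> (\<forall>q. irreducible q \<longrightarrow> q dvd minpoly M \<longrightarrow> degree q \<le> b)"

definition diagonal_mat :: "'a::zero^'n^'n \<Rightarrow> bool" where
  "diagonal_mat D \<longleftrightarrow> (\<forall>i j. i \<noteq> j \<longrightarrow> D $ i $ j = 0)"

text \<open>Semisimple: diagonalisable over the algebraically closed ambient field.\<close>
definition semisimple :: "('k \<Rightarrow> 'a::field) \<Rightarrow> 'k^'n^'n \<Rightarrow> bool" where
  "semisimple emb M \<longleftrightarrow> (\<exists>P::'a^'n^'n. invertible P \<and> diagonal_mat (matrix_inv P ** mapM emb M ** P))"

definition eigs :: "('k \<Rightarrow> 'a::field) \<Rightarrow> 'k^'n^'n \<Rightarrow> 'a set" where
  "eigs emb M = {z. det (mat z - mapM emb M) = 0}"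

definition spec_rad :: "('k \<Rightarrow> 'a::field) \<Rightarrow> ('a \<Rightarrow> real) \<Rightarrow> 'k^'n^'n \<Rightarrow> real" where
  "spec_rad emb av M = Max (av ` eigs emb M)"

definition mpK :: "('k::field \<Rightarrow> 'a::field) \<Rightarrow> 'a \<Rightarrow> 'k poly" where
  "mpK emb l = (THE p. lead_coeff p = 1 \<and> irreducible p \<and> poly (map_poly emb p) l = 0)"

definition HK :: "('k::field \<Rightarrow> 'a::field) \<Rightarrow> 'a \<Rightarrow> 'k" where
  "HK emb l = - coeff (mpK emb l) (degree (mpK emb l) - 1) / of_nat (degree (mpK emb l))"

definition VK :: "('k::field \<Rightarrow> 'a::field) \<Rightarrow> 'a \<Rightarrow> 'a" where
  "VK emb l = l - emb (HK emb l)"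

definition ReK :: "('k::field \<Rightarrow> 'a::field) \<Rightarrow> 'a \<Rightarrow> 'k" where
  "ReK emb l = HK emb l"

definition ImK :: "('k::field \<Rightarrow> 'a::field) \<Rightarrow> 'a \<Rightarrow> 'a \<Rightarrow> 'k" where
  "ImK emb ii l = (THE y. VK emb l = ii * emb y)"

definition Omega_hat :: "('k::field \<Rightarrow> 'a::field) \<Rightarrow> ('a \<Rightarrow> real) \<Rightarrow> (nat \<Rightarrow> 'k) \<Rightarrow> ('k^'n^'n) set" where
  "Omega_hat emb av a = {M. ereal (spec_rad emb av M) < Rf emb av a \<and>
     (\<forall>l \<in> eigs emb M.
        (if nonarch emb av
         then ereal (max (av (emb (HK emb l))) (av (VK emb l))) < Rf emb av a
         else ereal (av (emb (HK emb l)) + av (VK emb l)) < Rf emb av a))}"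

definition fK :: "('k \<Rightarrow> 'a::field) \<Rightarrow> ('a \<Rightarrow> real) \<Rightarrow> (nat \<Rightarrow> 'k) \<Rightarrow> 'a \<Rightarrow> 'a" where
  "fK emb av a z = av_suminf av (\<lambda>m. emb (a m) * z ^ m)"

definition Re_ser :: "('k::field \<Rightarrow> 'a::field) \<Rightarrow> (nat \<Rightarrow> 'k) \<Rightarrow> 'a \<Rightarrow> nat \<Rightarrow> 'a" where
  "Re_ser emb a l m = (let \<alpha> = emb (HK emb l); \<beta> = VK emb l in
     emb (a m) * (\<Sum>h\<le>m div 2. of_nat (m choose (2*h)) * \<alpha> ^ (m - 2*h) * \<beta> ^ (2*h)))"

definition Im_ser :: "('k::field \<Rightarrow> 'a::field) \<Rightarrow> (nat \<Rightarrow> 'k) \<Rightarrow> 'a \<Rightarrow> nat \<Rightarrow> 'a" where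
  "Im_ser emb a l m = (let \<alpha> = emb (HK emb l); \<beta> = VK emb l in
     (if m = 0 then 0 else
     emb (a m) * (\<Sum>h\<in>{1..(m+1) div 2}. of_nat (m choose (2*h - 1)) * \<alpha> ^ (m + 1 - 2*h) * \<beta> ^ (2*h - 1))))"

definition Ref :: "('k::field \<Rightarrow> 'a::field) \<Rightarrow> ('a \<Rightarrow> real) \<Rightarrow> (nat \<Rightarrow> 'k) \<Rightarrow> 'a \<Rightarrow> 'a" where
  "Ref emb av a l = av_suminf av (Re_ser emb a l)"

definition Imf :: "('k::field \<Rightarrow> 'a::field) \<Rightarrow> ('a \<Rightarrow> real) \<Rightarrow> 'a \<Rightarrow> (nat \<Rightarrow> 'k) \<Rightarrow> 'a \<Rightarrow> 'a" where
  "Imf emb av ii a l = - ii * av_suminf av (Im_ser emb a l)"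

text \<open>Frobenius covariant C_mu(M) = prod over the other distinct eigenvalues nu of (M - nu I)/(mu - nu),
  computed as the evaluation at M of the corresponding (commutative) product of polynomials.\<close>
definition frob_cov :: "('k \<Rightarrow> 'a::field) \<Rightarrow> 'k^'n^'n \<Rightarrow> 'a \<Rightarrow> 'a^'n^'n" where
  "frob_cov emb M \<mu> = peval (\<Prod>\<nu>\<in>eigs emb M - {\<mu>}. smult (1 / (\<mu> - \<nu>)) [:- \<nu>, 1:]) (mapM emb M)"

definition Gam :: "('k \<Rightarrow> 'a::field) \<Rightarrow> 'k^'n^'n \<Rightarrow> 'a set" where
  "Gam emb M = {g \<in> eigs emb M. g \<noteq> 0 \<and> g \<in> range emb}"

definition Lam :: "('k::linordered_field \<Rightarrow> 'a::field) \<Rightarrow> 'a \<Rightarrow> 'k^'n^'n \<Rightarrow> 'a set" where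
  "Lam emb ii M = {l \<in> eigs emb M. l \<notin> range emb \<and> 0 < ImK emb ii l}"

definition conjK :: "('k::field \<Rightarrow> 'a::field) \<Rightarrow> 'a \<Rightarrow> 'a \<Rightarrow> 'a" where
  "conjK emb ii l = emb (ReK emb l) - ii * emb (ImK emb ii l)"

definition Amat :: "('k \<Rightarrow> 'a::field) \<Rightarrow> 'k^'n^'n \<Rightarrow> 'a \<Rightarrow> 'a^'n^'n" where
  "Amat emb M g = frob_cov emb M g"

definition Bmat :: "('k::field \<Rightarrow> 'a::field) \<Rightarrow> 'a \<Rightarrow> 'k^'n^'n \<Rightarrow> 'a \<Rightarrow> 'a^'n^'n" where
  "Bmat emb ii M l = smat ii (frob_cov emb M l - frob_cov emb M (conjK emb ii l))"

definition A0mat :: "('k::linordered_field \<Rightarrow> 'a::field) \<Rightarrow> 'a \<Rightarrow> 'k^'n^'n \<Rightarrow> 'a^'n^'n" where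
  "A0mat emb ii M = mat 1 - (\<Sum>g\<in>Gam emb M. Amat emb M g)
      + (\<Sum>l\<in>Lam emb ii M. Bmat emb ii M l ** Bmat emb ii M l)"

end

theory Submission
  imports Defs
begin


lemma emb_0: "is_field_emb emb \<Longrightarrow> emb 0 = 0"
proof -
  assume "is_field_emb emb"
  then have "emb (0 + 0) = emb 0 + emb 0" unfolding is_field_emb_def by blast
  then show ?thesis by (simp only: add_0 add_cancel_right_right)
qed
lemma emb_1: "is_field_emb emb \<Longrightarrow> emb 1 = 1"
  unfolding is_field_emb_def by simp
lemma emb_add: "is_field_emb emb \<Longrightarrow> emb (x + y) = emb x + emb y"
  unfolding is_field_emb_def by simp
lemma emb_mult: "is_field_emb emb \<Longrightarrow> emb (x * y) = emb x * emb y"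
  unfolding is_field_emb_def by simp
lemma emb_uminus: "is_field_emb emb \<Longrightarrow> emb (- x) = - emb x"
proof -
  assume e: "is_field_emb emb"
  have "emb x + emb (- x) = 0" using emb_add[OF e, of x "-x", symmetric] emb_0[OF e] by simp
  then show ?thesis by (simp add: eq_neg_iff_add_eq_0 add.commute)
qed
lemma emb_diff: "is_field_emb emb \<Longrightarrow> emb (x - y) = emb x - emb y"
  by (metis diff_conv_add_uminus emb_add emb_uminus)
lemma emb_nz: "is_field_emb emb \<Longrightarrow> x \<noteq> 0 \<Longrightarrow> emb x \<noteq> 0"
proof
  assume e: "is_field_emb emb" and x: "x \<noteq> 0" and z: "emb x = 0"
  have "emb (x * inverse x) = emb x * emb (inverse x)" by (rule emb_mult[OF e])
  then show False using x z emb_1[OF e] by simp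
qed
lemma emb_inj: "is_field_emb emb \<Longrightarrow> inj emb"
proof (rule injI)
  fix x y assume e: "is_field_emb emb" and "emb x = emb y"
  then have "emb (x - y) = 0" by (simp add: emb_diff)
  then show "x = y" using emb_nz[OF e, of "x - y"] by auto
qed
lemma emb_eq_iff: "is_field_emb emb \<Longrightarrow> emb x = emb y \<longleftrightarrow> x = y"
  using emb_inj injD by fastforce
lemma emb_eq0_iff: "is_field_emb emb \<Longrightarrow> emb x = 0 \<longleftrightarrow> x = 0"
  using emb_0 emb_nz by fastforce
lemma emb_inverse: "is_field_emb emb \<Longrightarrow> emb (inverse x) = inverse (emb x)"
proof (cases "x = 0")
  case True
  assume "is_field_emb emb" then show ?thesis using True by (simp add: emb_0)
next
  case False
  assume e: "is_field_emb emb"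
  have "emb x * emb (inverse x) = 1"
    using False by (simp add: emb_mult[OF e, symmetric] emb_1[OF e])
  then show ?thesis by (rule inverse_unique[symmetric])
qed
lemma emb_divide: "is_field_emb emb \<Longrightarrow> emb (x / y) = emb x / emb y"
  by (simp add: divide_inverse emb_inverse emb_mult)
lemma emb_power: "is_field_emb emb \<Longrightarrow> emb (x ^ n) = emb x ^ n"
  by (induction n) (simp_all add: emb_1 emb_mult)
lemma emb_of_nat: "is_field_emb emb \<Longrightarrow> emb (of_nat n) = of_nat n"
  by (induction n) (simp_all add: emb_0 emb_1 emb_add)
lemma emb_sum: "is_field_emb emb \<Longrightarrow> emb (sum f S) = sum (\<lambda>x. emb (f x)) S"
  by (induction S rule: infinite_finite_induct) (simp_all add: emb_0 emb_add)
lemma emb_prod: "is_field_emb emb \<Longrightarrow> emb (prod f S) = prod (\<lambda>x. emb (f x)) S"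
  by (induction S rule: infinite_finite_induct) (simp_all add: emb_1 emb_mult)
lemma emb_numeral: "is_field_emb emb \<Longrightarrow> emb (numeral k) = numeral k"
  using emb_of_nat[of emb "numeral k"] by simp

lemmas emb_simps = emb_0 emb_1 emb_add emb_mult emb_uminus emb_diff emb_inverse emb_divide
  emb_power emb_of_nat emb_sum emb_prod emb_numeral

lemma coeff_map_emb: "is_field_emb emb \<Longrightarrow> coeff (map_poly emb p) n = emb (coeff p n)"
  by (simp add: coeff_map_poly emb_0)
lemma degree_map_emb: "is_field_emb emb \<Longrightarrow> degree (map_poly emb p) = degree p"
  by (simp add: degree_map_poly emb_nz)
lemma map_emb_add: "is_field_emb emb \<Longrightarrow> map_poly emb (p + q) = map_poly emb p + map_poly emb q"
  by (simp add: poly_eq_iff coeff_map_emb emb_add)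
lemma map_emb_diff: "is_field_emb emb \<Longrightarrow> map_poly emb (p - q) = map_poly emb p - map_poly emb q"
  by (simp add: poly_eq_iff coeff_map_emb emb_diff)
lemma map_emb_uminus: "is_field_emb emb \<Longrightarrow> map_poly emb (- p) = - map_poly emb p"
  by (simp add: poly_eq_iff coeff_map_emb emb_uminus)
lemma map_emb_mult: "is_field_emb emb \<Longrightarrow> map_poly emb (p * q) = map_poly emb p * map_poly emb q"
  by (simp add: poly_eq_iff coeff_map_emb coeff_mult emb_sum emb_mult)
lemma map_emb_1: "is_field_emb emb \<Longrightarrow> map_poly emb 1 = 1"
  by (simp add: emb_1)
lemma map_emb_pCons: "is_field_emb emb \<Longrightarrow> map_poly emb (pCons c p) = pCons (emb c) (map_poly emb p)"
  by (simp add: map_poly_pCons emb_0)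

definition ev :: "('k::field \<Rightarrow> 'a::field) \<Rightarrow> 'a \<Rightarrow> 'k poly \<Rightarrow> 'a" where
  "ev emb z p = poly (map_poly emb p) z"

lemma ev_add: "is_field_emb emb \<Longrightarrow> ev emb z (p + q) = ev emb z p + ev emb z q"
  by (simp add: ev_def map_emb_add)
lemma ev_diff: "is_field_emb emb \<Longrightarrow> ev emb z (p - q) = ev emb z p - ev emb z q"
  by (simp add: ev_def map_emb_diff)
lemma ev_uminus: "is_field_emb emb \<Longrightarrow> ev emb z (- p) = - ev emb z p"
  by (simp add: ev_def map_emb_uminus)
lemma ev_mult: "is_field_emb emb \<Longrightarrow> ev emb z (p * q) = ev emb z p * ev emb z q"
  by (simp add: ev_def map_emb_mult)
lemma ev_1: "is_field_emb emb \<Longrightarrow> ev emb z 1 = 1"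
  by (simp add: ev_def map_emb_1)
lemma ev_0: "ev emb z 0 = 0"
  by (simp add: ev_def)
lemma ev_const: "is_field_emb emb \<Longrightarrow> ev emb z [:c:] = emb c"
  by (simp add: ev_def map_emb_pCons emb_0)
lemma ev_X: "is_field_emb emb \<Longrightarrow> ev emb z [:0, 1:] = z"
  by (simp add: ev_def map_emb_pCons emb_0 emb_1)
lemma ev_sum: "is_field_emb emb \<Longrightarrow> ev emb z (sum f S) = sum (\<lambda>x. ev emb z (f x)) S"
  by (induction S rule: infinite_finite_induct) (simp_all add: ev_0 ev_add)
lemma ev_prod: "is_field_emb emb \<Longrightarrow> ev emb z (prod f S) = prod (\<lambda>x. ev emb z (f x)) S"
  by (induction S rule: infinite_finite_induct) (simp_all add: ev_1 ev_mult)
lemma ev_of_int: "is_field_emb emb \<Longrightarrow> ev emb z (of_int k) = of_int k"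
proof -
  assume e: "is_field_emb emb"
  have "ev emb z (of_nat n) = of_nat n" for n
    by (induction n) (simp_all add: e ev_0 ev_add ev_1)
  then show ?thesis using e
    by (cases k) (simp_all add: ev_uminus ev_diff ev_1)
qed


section \<open>Diagonal matrices and conjugation\<close>

definition dg :: "('n::finite \<Rightarrow> 'a::zero) \<Rightarrow> 'a^'n^'n" where
  "dg f = (\<chi> i j. if i = j then f i else 0)"

lemma dg_nth: "dg f $ i $ j = (if i = j then f i else 0)"
  by (simp add: dg_def)

lemma dg_mult: "dg f ** dg g = dg (\<lambda>i. f i * (g i :: 'a::semiring_1))"
proof -
  have "(dg f ** dg g) $ i $ j = dg (\<lambda>i. f i * g i) $ i $ j" for i j
  proof -
    have "(dg f ** dg g) $ i $ j = (\<Sum>k\<in>UNIV. (if i = k then f i else 0) * (if k = j then g k else 0))"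
      by (simp add: matrix_matrix_mult_def dg_nth)
    also have "\<dots> = (\<Sum>k\<in>UNIV. if k = i then (if i = j then f i * g i else 0) else 0)"
      by (rule sum.cong) auto
    also have "\<dots> = dg (\<lambda>i. f i * g i) $ i $ j" by (simp add: dg_nth)
    finally show ?thesis .
  qed
  then show ?thesis by (simp add: vec_eq_iff)
qed

lemma dg_add: "dg f + dg g = dg (\<lambda>i. f i + (g i :: 'a::monoid_add))"
  by (simp add: vec_eq_iff dg_nth)

lemma dg_diff: "dg f - dg g = dg (\<lambda>i. f i - (g i :: 'a::group_add))"
  by (simp add: vec_eq_iff dg_nth)

lemma dg_sum: "(\<Sum>s\<in>S. dg (F s)) = dg (\<lambda>i. \<Sum>s\<in>S. (F s i :: 'a::comm_monoid_add))"
  by (induction S rule: infinite_finite_induct) (simp_all add: dg_add vec_eq_iff dg_nth)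

lemma smat_dg: "smat c (dg f) = dg (\<lambda>i. c * (f i :: 'a::semiring_1))"
  by (simp add: vec_eq_iff dg_nth smat_def)

lemma mat_dg: "mat c = dg (\<lambda>i. c)"
  by (simp add: vec_eq_iff dg_nth mat_def)

lemma dg_eq_iff: "dg f = dg g \<longleftrightarrow> f = g"
proof
  assume "dg f = dg g"
  then have "dg f $ i $ i = dg g $ i $ i" for i by simp
  then show "f = g" by (simp add: dg_nth fun_eq_iff)
qed simp

lemma mpow_dg: "mpow (dg f) k = dg (\<lambda>i. (f i :: 'a::semiring_1) ^ k)"
  by (induction k) (simp_all add: mat_dg dg_mult)

lemma smat_add: "smat c (X + Y) = smat c X + smat c (Y :: 'a::semiring_1^'n^'n)"
  by (simp add: vec_eq_iff smat_def distrib_left)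
lemma smat_diff: "smat c (X - Y) = smat c X - smat c (Y :: 'a::ring_1^'n^'n)"
  by (simp add: vec_eq_iff smat_def right_diff_distrib)
lemma smat_mult_left: "smat c (X ** Y) = smat c X ** (Y :: 'a::comm_semiring_1^'n^'n)"
  by (simp add: vec_eq_iff smat_def matrix_matrix_mult_def sum_distrib_left mult.assoc)
lemma smat_mult_right: "smat c (X ** Y) = X ** smat c (Y :: 'a::comm_semiring_1^'n^'n)"
  by (simp add: vec_eq_iff smat_def matrix_matrix_mult_def sum_distrib_left mult.left_commute)
lemma smat_sum: "smat c (sum F S) = (\<Sum>s\<in>S. smat c (F s :: 'a::semiring_1^'n^'n))"
  by (induction S rule: infinite_finite_induct) (simp_all add: smat_add vec_eq_iff smat_def distrib_left)
lemma smat_smat: "smat c (smat e X) = smat (c * e) (X :: 'a::semiring_1^'n^'n)"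
  by (simp add: vec_eq_iff smat_def mult.assoc)
lemma smat_0: "smat 0 (X :: 'a::semiring_1^'n^'n) = 0"
  by (simp add: vec_eq_iff smat_def)

lemma matrix_add_rdistrib': "(B + C) ** A = B ** A + C ** (A :: 'a::semiring_1^'p^'n)"
  by (simp add: vec_eq_iff matrix_matrix_mult_def distrib_right sum.distrib)
lemma matrix_diff_ldistrib: "A ** (B - C) = A ** B - A ** (C :: 'a::ring_1^'n^'n)"
  by (simp add: vec_eq_iff matrix_matrix_mult_def right_diff_distrib sum_subtractf)
lemma matrix_diff_rdistrib: "(B - C) ** A = B ** A - C ** (A :: 'a::ring_1^'n^'n)"
  by (simp add: vec_eq_iff matrix_matrix_mult_def left_diff_distrib sum_subtractf)
lemma matrix_sum_ldistrib: "A ** sum F S = (\<Sum>s\<in>S. A ** (F s :: 'a::semiring_1^'n^'n))"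
  by (induction S rule: infinite_finite_induct) (simp_all add: matrix_add_ldistrib)
lemma matrix_sum_rdistrib: "sum F S ** A = (\<Sum>s\<in>S. (F s :: 'a::semiring_1^'n^'n) ** A)"
  by (induction S rule: infinite_finite_induct) (simp_all add: matrix_add_rdistrib')

definition cj :: "'a::semiring_1^'n^'n \<Rightarrow> 'a^'n^'n \<Rightarrow> 'a^'n^'n \<Rightarrow> 'a^'n^'n" where
  "cj P Q X = P ** X ** Q"

lemma cj_add: "cj P Q (X + Y) = cj P Q X + cj P Q Y"
  by (simp add: cj_def matrix_add_ldistrib matrix_add_rdistrib')
lemma cj_diff: "cj P Q (X - Y) = cj P Q X - cj P Q (Y :: 'a::ring_1^'n^'n)"
  by (simp add: cj_def matrix_diff_ldistrib matrix_diff_rdistrib)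
lemma cj_sum: "cj P Q (sum F S) = (\<Sum>s\<in>S. cj P Q (F s))"
  by (simp add: cj_def matrix_sum_ldistrib matrix_sum_rdistrib)
lemma cj_smat: "smat c (cj P Q X) = cj P Q (smat c (X :: 'a::comm_semiring_1^'n^'n))"
  unfolding cj_def by (metis smat_mult_left smat_mult_right)
lemma QP_cancel: "Q ** P = mat 1 \<Longrightarrow> Q ** (P ** Z) = (Z :: 'a::semiring_1^'n^'n)"
  by (simp add: matrix_mul_assoc)
lemma cj_mult: "Q ** P = mat 1 \<Longrightarrow> cj P Q X ** cj P Q Y = cj P Q (X ** Y)"
  by (simp add: cj_def matrix_mul_assoc[symmetric] QP_cancel)
lemma cj_one: "P ** Q = mat 1 \<Longrightarrow> cj P Q (mat 1) = mat 1"
  by (simp add: cj_def)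
lemma mpow_cj: "P ** Q = mat 1 \<Longrightarrow> Q ** P = mat 1 \<Longrightarrow> mpow (cj P Q X) k = cj P Q (mpow X k)"
  by (induction k) (simp_all add: cj_one cj_mult)

lemma mult_dg_nth: "(P ** dg f) $ i $ l = P $ i $ l * (f l :: 'a::semiring_1)"
proof -
  have "(P ** dg f) $ i $ l = (\<Sum>k\<in>UNIV. P $ i $ k * (if k = l then f k else 0))"
    by (simp add: matrix_matrix_mult_def dg_nth)
  also have "\<dots> = (\<Sum>k\<in>UNIV. if k = l then P $ i $ l * f l else 0)"
    by (rule sum.cong) auto
  also have "\<dots> = P $ i $ l * f l" by simp
  finally show ?thesis .
qed

lemma cj_dg_nth: "cj P Q (dg f) $ i $ j = (\<Sum>k\<in>UNIV. P $ i $ k * f k * Q $ k $ j)"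
  by (simp add: cj_def matrix_matrix_mult_def[of "P ** dg f"] mult_dg_nth)

lemma cj_inj: "P ** Q = mat 1 \<Longrightarrow> Q ** P = mat 1 \<Longrightarrow> cj P Q X = cj P Q Y \<Longrightarrow> X = Y"
proof -
  assume a: "P ** Q = mat 1" "Q ** P = mat 1" "cj P Q X = cj P Q Y"
  have "Q ** cj P Q X ** P = X" for X
  proof -
    have "Q ** cj P Q X ** P = (Q ** P) ** X ** (Q ** P)" by (simp only: cj_def matrix_mul_assoc)
    then show ?thesis using a(2) by simp
  qed
  note e = this
  from a(3) have "Q ** cj P Q X ** P = Q ** cj P Q Y ** P" by (rule arg_cong)
  then show "X = Y" unfolding e .
qed

lemma peval_bound: "degree p \<le> N \<Longrightarrow> peval p A = (\<Sum>i\<le>N. smat (coeff p i) (mpow A i))"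
proof -
  assume "degree p \<le> N"
  then have "(\<Sum>i\<le>N. smat (coeff p i) (mpow A i)) = (\<Sum>i\<le>degree p. smat (coeff p i) (mpow A i))"
    by (intro sum.mono_neutral_right) (auto simp: coeff_eq_0 smat_0)
  then show ?thesis by (simp add: peval_def)
qed

lemma peval_cj: "P ** Q = mat 1 \<Longrightarrow> Q ** P = mat 1 \<Longrightarrow> peval p (cj P Q X) = cj P Q (peval p X)"
  by (simp add: peval_def mpow_cj cj_smat cj_sum)

lemma peval_dg: "peval p (dg f) = dg (\<lambda>i. poly p (f i))"
  by (simp add: peval_def mpow_dg smat_dg dg_sum poly_altdef mult.commute)

lemma mapM_add: "is_field_emb emb \<Longrightarrow> mapM emb (X + Y) = mapM emb X + mapM emb Y"
  by (simp add: vec_eq_iff mapM_def emb_add)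
lemma mapM_mult: "is_field_emb emb \<Longrightarrow> mapM emb (X ** Y) = mapM emb X ** mapM emb Y"
  by (simp add: vec_eq_iff mapM_def matrix_matrix_mult_def emb_sum emb_mult)
lemma mapM_one: "is_field_emb emb \<Longrightarrow> mapM emb (mat 1) = mat 1"
  by (simp add: vec_eq_iff mapM_def mat_def emb_0 emb_1)
lemma mapM_zero: "is_field_emb emb \<Longrightarrow> mapM emb 0 = 0"
  by (simp add: vec_eq_iff mapM_def emb_0)
lemma mapM_smat: "is_field_emb emb \<Longrightarrow> mapM emb (smat c X) = smat (emb c) (mapM emb X)"
  by (simp add: vec_eq_iff mapM_def smat_def emb_mult)
lemma mapM_sum: "is_field_emb emb \<Longrightarrow> mapM emb (sum F S) = (\<Sum>s\<in>S. mapM emb (F s))"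
  by (induction S rule: infinite_finite_induct) (simp_all add: mapM_add mapM_zero)
lemma mapM_mpow: "is_field_emb emb \<Longrightarrow> mapM emb (mpow X k) = mpow (mapM emb X) k"
  by (induction k) (simp_all add: mapM_one mapM_mult)
lemma mapM_inj: "is_field_emb emb \<Longrightarrow> mapM emb X = mapM emb Y \<Longrightarrow> X = Y"
  by (simp add: vec_eq_iff mapM_def emb_eq_iff)

lemma peval_map: "is_field_emb emb \<Longrightarrow> mapM emb (peval p X) = peval (map_poly emb p) (mapM emb X)"
  by (simp add: peval_def degree_map_emb coeff_map_emb mapM_sum mapM_smat mapM_mpow)


section \<open>Polynomial algebra over K with roots in the ambient field\<close>

lemma ev_smult: "is_field_emb emb \<Longrightarrow> ev emb z (smult c p) = emb c * ev emb z p"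
proof -
  assume e: "is_field_emb emb"
  have "smult c p = [:c:] * p" by simp
  then show ?thesis by (simp only: ev_mult[OF e] ev_const[OF e])
qed

lemma ev_nz_const: "is_field_emb emb \<Longrightarrow> degree p = 0 \<Longrightarrow> p \<noteq> 0 \<Longrightarrow> ev emb z p \<noteq> 0"
proof -
  assume e: "is_field_emb emb" and "degree p = 0" "p \<noteq> 0"
  then obtain c where c: "p = [:c:]" using degree0_coeffs by blast
  then have "c \<noteq> 0" using \<open>p \<noteq> 0\<close> by simp
  then show ?thesis using c by (simp add: ev_const[OF e] emb_nz[OF e])
qed

lemma nz_root_deg:
  fixes r :: "'k::field poly"
  assumes e: "is_field_emb emb" and "r \<noteq> 0" "ev emb z r = 0"
  shows "degree r > 0"
  using ev_nz_const[OF e _ assms(2)] assms(3) by (cases "degree r") auto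

lemma irr_no_small_root:
  fixes p :: "'k::field poly"
  assumes e: "is_field_emb emb" and irr: "irreducible p" and rp: "ev emb z p = 0"
  shows "r \<noteq> 0 \<Longrightarrow> ev emb z r = 0 \<Longrightarrow> degree r < degree p \<Longrightarrow> False"
proof (induction "degree r" arbitrary: r rule: less_induct)
  case less
  have rdeg: "degree r > 0" using nz_root_deg[OF e less.prems(1,2)] .
  then have runit: "\<not> is_unit r" using is_unit_iff_degree[OF less.prems(1)] by simp
  define m where "m = p mod r"
  have pm: "p div r * r + m = p" by (simp add: m_def)
  have "ev emb z (p div r * r + m) = ev emb z p" using pm by simp
  then have mroot: "ev emb z m = 0" using less.prems(2) rp by (simp add: ev_add ev_mult e)
  show False
  proof (cases "m = 0")
    case True
    then have pe: "p = p div r * r" using pm by simp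
    have pnz: "p \<noteq> 0" using irr by auto
    then have dnz: "p div r \<noteq> 0" using pe by auto
    have "is_unit (p div r) \<or> is_unit r" using irreducibleD[OF irr pe] .
    then have "is_unit (p div r)" using runit by blast
    then have "degree (p div r) = 0" using is_unit_iff_degree[OF dnz] by blast
    then have "degree p = degree r" using pe degree_mult_eq[OF dnz less.prems(1)] by simp
    then show False using less.prems(3) by simp
  next
    case False
    then have "degree m < degree r" using degree_mod_less'[OF less.prems(1)] by (simp add: m_def)
    then show False using less.hyps[of m] False mroot less.prems(3) by simp
  qed
qed

lemma irr_dvd:
  fixes p q :: "'k::field poly"
  assumes e: "is_field_emb emb" and irr: "irreducible p" and r1: "ev emb z p = 0" and r2: "ev emb z q = 0"
  shows "p dvd q"
proof -
  define m where "m = q mod p"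
  have qm: "q div p * p + m = q" by (simp add: m_def)
  have "ev emb z (q div p * p + m) = ev emb z q" using qm by simp
  then have mroot: "ev emb z m = 0" using r1 r2 by (simp add: ev_add ev_mult e)
  have pnz: "p \<noteq> 0" using irr by auto
  have "m = 0"
  proof (rule ccontr)
    assume "m \<noteq> 0"
    then have "degree m < degree p" using degree_mod_less'[OF pnz] by (simp add: m_def)
    then show False using irr_no_small_root[OF e irr r1 \<open>m \<noteq> 0\<close> mroot] by simp
  qed
  then show ?thesis by (simp add: m_def mod_0_imp_dvd)
qed

lemma monic_irr_root_exists:
  fixes q :: "'k::field poly"
  assumes e: "is_field_emb emb"
  shows "q \<noteq> 0 \<Longrightarrow> ev emb z q = 0 \<Longrightarrow> \<exists>p. lead_coeff p = 1 \<and> irreducible p \<and> ev emb z p = 0"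
proof (induction "degree q" arbitrary: q rule: less_induct)
  case less
  have qdeg: "degree q > 0" using nz_root_deg[OF e less.prems] .
  then have nu: "\<not> is_unit q" using is_unit_iff_degree[OF less.prems(1)] by simp
  show ?case
  proof (cases "irreducible q")
    case True
    define l where "l = inverse (lead_coeff q)"
    have lnz: "l \<noteq> 0" using less.prems(1) by (simp add: l_def)
    have "irreducible ([:l:] * q)"
      using irreducible_mult_unit_left[of "[:l:]" q] lnz True by (simp add: is_unit_const_poly_iff dvd_field_iff)
    moreover have "lead_coeff ([:l:] * q) = 1" using less.prems(1) by (simp add: l_def)
    moreover have "ev emb z ([:l:] * q) = 0" using less.prems(2) by (simp add: ev_smult e)
    ultimately show ?thesis by blast
  next
    case False
    then obtain b c where c: "q = b * c" "\<not> is_unit b" "\<not> is_unit c"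
      using less.prems(1) nu unfolding irreducible_def by blast
    have bnz: "b \<noteq> 0" and cnz: "c \<noteq> 0" using c less.prems(1) by auto
    have bdeg: "degree b > 0" using c(2) is_unit_iff_degree[OF bnz] by simp
    have cdeg: "degree c > 0" using c(3) is_unit_iff_degree[OF cnz] by simp
    have dq: "degree q = degree b + degree c" using c bnz cnz by (simp add: degree_mult_eq)
    have "ev emb z b * ev emb z c = 0" using less.prems(2) c by (simp add: ev_mult e)
    then consider "ev emb z b = 0" | "ev emb z c = 0" by auto
    then show ?thesis
    proof cases
      case 1
      then show ?thesis using less.hyps[of b] bnz dq cdeg by simp
    next
      case 2
      then show ?thesis using less.hyps[of c] cnz dq bdeg by simp
    qed
  qed
qed

lemma monic_irr_unique:
  fixes p1 p2 :: "'k::field poly"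
  assumes e: "is_field_emb emb"
    and "lead_coeff p1 = 1" "irreducible p1" "ev emb z p1 = 0"
    and "lead_coeff p2 = 1" "irreducible p2" "ev emb z p2 = 0"
  shows "p1 = p2"
proof -
  have d12: "p1 dvd p2" and d21: "p2 dvd p1" using assms irr_dvd[OF e] by blast+
  have nz: "p1 \<noteq> 0" "p2 \<noteq> 0" using assms by auto
  obtain r where r: "p2 = p1 * r" using d12 by (elim dvdE)
  have rnz: "r \<noteq> 0" using r nz by auto
  have "degree p1 \<le> degree p2" "degree p2 \<le> degree p1"
    using dvd_imp_degree_le d12 d21 nz by auto
  then have "degree r = 0" using r degree_mult_eq[OF nz(1) rnz] by simp
  then obtain c where c: "r = [:c:]" using degree0_coeffs by blast
  have "lead_coeff p2 = lead_coeff p1 * c" using r c by (simp add: lead_coeff_mult)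
  then have "c = 1" using assms by simp
  then show ?thesis using r c by simp
qed

lemma mpK_eq:
  fixes p :: "'k::field poly"
  assumes e: "is_field_emb emb" and "lead_coeff p = 1" "irreducible p" "ev emb z p = 0"
  shows "mpK emb z = p"
  unfolding mpK_def
proof (rule the_equality)
  show "lead_coeff p = 1 \<and> irreducible p \<and> poly (map_poly emb p) z = 0"
    using assms by (simp add: ev_def)
  fix p' assume "lead_coeff p' = 1 \<and> irreducible p' \<and> poly (map_poly emb p') z = 0"
  then show "p' = p" using monic_irr_unique[OF e, of p' z p] assms by (simp add: ev_def)
qed

lemma ev_det:
  assumes e: "is_field_emb emb"
  shows "ev emb z (det X) = det (\<chi> i j. ev emb z (X $ i $ j))"
  unfolding det_def by (simp add: ev_sum ev_mult ev_of_int ev_prod e)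

lemma ev_deg2:
  assumes e: "is_field_emb emb" and "degree p = 2"
  shows "ev emb z p = emb (coeff p 0) + emb (coeff p 1) * z + emb (coeff p 2) * z ^ 2"
  using assms by (simp add: ev_def poly_altdef degree_map_emb coeff_map_emb numeral_2_eq_2
     atMost_Suc power2_eq_square)


section \<open>Quadratic eigenvalues\<close>

lemma ii_nz: "(ii::'a::field) * ii = -1 \<Longrightarrow> ii \<noteq> 0"
  by auto

lemma ImK_eq:
  assumes e: "is_field_emb emb" and ii: "ii * ii = -1" and v: "VK emb l = ii * emb y"
  shows "ImK emb ii l = y"
  unfolding ImK_def
proof (rule the_equality)
  show "VK emb l = ii * emb y" by fact
  fix y' assume "VK emb l = ii * emb y'"
  then have "emb y' = emb y" using v ii_nz[OF ii] by auto
  then show "y' = y" using emb_eq_iff[OF e] by blast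
qed

lemma quad_root_struct:
  fixes emb :: "'k::linordered_field \<Rightarrow> 'a::field"
  assumes e: "is_field_emb emb" and ii: "ii * ii = -1" and oqc: "ord_quad_closed TYPE('k)"
    and nK: "z \<notin> range emb"
    and eq: "z * z + emb b * z + emb c = 0"
  shows "\<exists>y. y \<noteq> 0 \<and> z + emb (b / 2) = ii * emb y"
proof -
  define v where "v = z + emb (b / 2)"
  define D where "D = b * b / 4 - c"
  have two: "emb (b / 2) + emb (b / 2) = emb b"
    by (simp add: emb_add[OF e, symmetric])
  have "v * v = z * z + z * (emb (b/2) + emb (b/2)) + emb (b / 2) * emb (b / 2)"
    by (simp add: v_def algebra_simps)
  also have "\<dots> = z * z + emb b * z + emb c + emb D"
    using two by (simp add: D_def emb_diff[OF e] emb_mult[OF e, symmetric] algebra_simps)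
  finally have vv: "v * v = emb D" using eq by simp
  have zv: "z = v - emb (b / 2)" by (simp add: v_def)
  have "\<not> D \<ge> 0"
  proof
    assume D: "D \<ge> 0"
    obtain y where y: "y * y = D"
    proof (cases "D = 0")
      case True then show ?thesis using that[of 0] by simp
    next
      case False then show ?thesis using oqc D that unfolding ord_quad_closed_def by force
    qed
    have "(v - emb y) * (v + emb y) = v * v - emb (y * y)"
      by (simp add: emb_mult[OF e] algebra_simps)
    then have "(v - emb y) * (v + emb y) = 0" using vv y by simp
    then have "v = emb y \<or> v = emb (- y)" by (auto simp: emb_uminus[OF e] eq_neg_iff_add_eq_0)
    then have "z = emb (y - b / 2) \<or> z = emb (- y - b / 2)" using zv by (auto simp: emb_diff[OF e])
    then show False using nK by auto
  qed
  then have Dn: "- D > 0" by simp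
  then obtain s where s: "s * s = - D" using oqc unfolding ord_quad_closed_def by blast
  have snz: "s \<noteq> 0" using s Dn by auto
  have "(v - ii * emb s) * (v + ii * emb s) = v * v - (ii * ii) * emb (s * s)"
    by (simp add: emb_mult[OF e] algebra_simps)
  also have "\<dots> = 0" using vv s ii by (simp add: emb_uminus[OF e])
  finally have "v = ii * emb s \<or> v = ii * emb (- s)"
    by (auto simp: emb_uminus[OF e] eq_neg_iff_add_eq_0)
  then show ?thesis using snz unfolding v_def by (metis neg_equal_0_iff_equal)
qed


locale ctx =
  fixes emb :: "'k::linordered_field \<Rightarrow> 'a::field" and ii :: 'a
    and M :: "'k^'n^'n" and P Q :: "'a^'n^'n" and d :: "'n \<Rightarrow> 'a"
  assumes emb: "is_field_emb emb" and ii: "ii * ii = -1" and K_oqc: "ord_quad_closed TYPE('k)"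
    and M_split: "splitting_bound_le M 2" and PQ: "P ** Q = mat 1" and QP: "Q ** P = mat 1"
    and A_eq: "mapM emb M = cj P Q (dg d)"
begin

lemma cj_mat: "cj P Q (mat z) = mat z"
proof -
  have m: "mat z = smat z (mat 1 :: 'a^'n^'n)" by (simp add: vec_eq_iff smat_def mat_def)
  have "cj P Q (mat z) = smat z (cj P Q (mat 1))" by (simp only: m cj_smat)
  also have "\<dots> = mat z" by (simp add: cj_one[OF PQ] m)
  finally show ?thesis .
qed

lemma det_cj: "det (cj P Q X) = det X"
proof -
  have d1: "det (P ** Q) = 1" using PQ by simp
  have "det P * det Q = 1" using d1 by (simp only: det_mul)
  moreover have "det (cj P Q X) = det X * (det P * det Q)"
    by (simp only: cj_def det_mul mult_ac)
  ultimately show ?thesis by simp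
qed

lemma det_A: "det (mat z - mapM emb M) = (\<Prod>k\<in>UNIV. z - d k)"
proof -
  have "mat z - mapM emb M = cj P Q (mat z) - cj P Q (dg d)" by (simp only: A_eq cj_mat)
  also have "\<dots> = cj P Q (mat z - dg d)" by (simp only: cj_diff)
  also have "\<dots> = cj P Q (dg (\<lambda>k. z - d k))" by (simp only: mat_dg dg_diff)
  finally have "mat z - mapM emb M = cj P Q (dg (\<lambda>k. z - d k))" .
  then show ?thesis by (simp add: det_cj det_diagonal dg_nth)
qed

lemma eigs_eq: "eigs emb M = range d"
  unfolding eigs_def det_A by auto

lemma cj_zero: "cj P Q 0 = 0"
  by (simp add: cj_def)

lemma dg_zero: "dg (\<lambda>k. 0) = (0::'a^'n^'n)"
  by (simp add: vec_eq_iff dg_nth)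

lemma mapM_peval: "mapM emb (peval p M) = cj P Q (dg (\<lambda>k. ev emb (d k) p))"
  by (simp add: peval_map[OF emb] A_eq peval_cj[OF PQ QP] peval_dg ev_def)

lemma peval_iff: "peval p M = 0 \<longleftrightarrow> (\<forall>k. ev emb (d k) p = 0)"
proof
  assume "peval p M = 0"
  then have "mapM emb (peval p M) = 0" by (simp add: mapM_zero[OF emb])
  then have "cj P Q (dg (\<lambda>k. ev emb (d k) p)) = cj P Q (dg (\<lambda>k. 0))"
    by (simp only: mapM_peval dg_zero cj_zero)
  then have "dg (\<lambda>k. ev emb (d k) p) = dg (\<lambda>k. 0)" by (rule cj_inj[OF PQ QP])
  then show "\<forall>k. ev emb (d k) p = 0" by (simp add: dg_eq_iff fun_eq_iff)
next
  assume "\<forall>k. ev emb (d k) p = 0"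
  then have "mapM emb (peval p M) = mapM emb 0"
    by (simp add: mapM_peval mapM_zero[OF emb] dg_zero cj_zero)
  then show "peval p M = 0" by (rule mapM_inj[OF emb])
qed

definition CP :: "'k poly" where
  "CP = det (\<chi> i j. (if i = j then [:0, 1:] else 0) - [:M $ i $ j:])"

lemma ev_CP: "ev emb z CP = (\<Prod>k\<in>UNIV. z - d k)"
proof -
  have "(\<chi> i j. ev emb z ((\<chi> i j. (if i = j then [:0, 1:] else 0) - [:M $ i $ j:]) $ i $ j))
        = mat z - mapM emb M"
    by (simp add: vec_eq_iff ev_diff[OF emb] ev_X[OF emb] ev_const[OF emb] ev_0 mat_def mapM_def)
  then show ?thesis unfolding CP_def by (simp add: ev_det[OF emb] det_A)
qed

lemma exists_non_eig: "\<exists>z. z \<notin> range d"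
proof -
  have "inj (of_nat :: nat \<Rightarrow> 'a)"
  proof (rule injI)
    fix m n assume "(of_nat m :: 'a) = of_nat n"
    then have "emb (of_nat m) = emb (of_nat n)" by (simp add: emb_of_nat[OF emb])
    then have "(of_nat m :: 'k) = of_nat n" using emb_eq_iff[OF emb] by blast
    then show "m = n" by simp
  qed
  then have "infinite (range (of_nat :: nat \<Rightarrow> 'a))" using finite_imageD by blast
  moreover have "finite (range d)" by simp
  ultimately show ?thesis by (metis finite_subset subsetI)
qed

lemma CP_nz: "CP \<noteq> 0"
proof
  assume "CP = 0"
  obtain z where z: "z \<notin> range d" using exists_non_eig by blast
  have "ev emb z CP \<noteq> 0" using z by (auto simp: ev_CP)
  then show False using \<open>CP = 0\<close> by (simp add: ev_0)
qed

lemma CP_root: "ev emb (d k) CP = 0"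
  by (simp add: ev_CP) (metis UNIV_I)

lemma minpoly_spec: "lead_coeff (minpoly M) = 1 \<and> (\<forall>k. ev emb (d k) (minpoly M) = 0)"
proof -
  define S where "S = {q. q \<noteq> 0 \<and> peval q M = 0}"
  have CPS: "CP \<in> S" using CP_nz CP_root by (simp add: S_def peval_iff)
  define n0 where "n0 = (LEAST n. \<exists>q\<in>S. degree q = n)"
  obtain q0 where q0: "q0 \<in> S" "degree q0 = n0"
    using LeastI_ex[of "\<lambda>n. \<exists>q\<in>S. degree q = n"] CPS unfolding n0_def by blast
  have minl: "n0 \<le> degree q" if "q \<in> S" for q
    unfolding n0_def using that by (intro Least_le) blast
  define p0 where "p0 = smult (inverse (lead_coeff q0)) q0"
  have q0nz: "q0 \<noteq> 0" using q0 by (simp add: S_def)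
  have p0lead: "lead_coeff p0 = 1" using q0nz by (simp add: p0_def)
  have "degree p0 = degree q0" using q0nz by (simp add: p0_def)
  then have p0deg: "degree p0 = n0" using q0(2) by simp
  have p0ann: "peval p0 M = 0"
    using q0 by (simp add: S_def peval_iff p0_def ev_smult[OF emb])
  have spec: "lead_coeff p0 = 1 \<and> peval p0 M = 0 \<and>
      (\<forall>q. q \<noteq> 0 \<longrightarrow> peval q M = 0 \<longrightarrow> degree p0 \<le> degree q)"
    using p0lead p0ann p0deg minl by (simp add: S_def)
  have "minpoly M = p0"
    unfolding minpoly_def
  proof (rule the_equality)
    show "lead_coeff p0 = 1 \<and> peval p0 M = 0 \<and>
      (\<forall>q. q \<noteq> 0 \<longrightarrow> peval q M = 0 \<longrightarrow> degree p0 \<le> degree q)" by (rule spec)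
    fix p' assume sp: "lead_coeff p' = 1 \<and> peval p' M = 0 \<and>
      (\<forall>q. q \<noteq> 0 \<longrightarrow> peval q M = 0 \<longrightarrow> degree p' \<le> degree q)"
    have p'nz: "p' \<noteq> 0" using sp by auto
    have p0nz: "p0 \<noteq> 0" using p0lead by auto
    have "degree p' \<le> degree p0" using sp p0nz p0ann by blast
    moreover have "degree p0 \<le> degree p'" using spec p'nz sp by blast
    ultimately have deq: "degree p' = degree p0" by simp
    show "p' = p0"
    proof (rule ccontr)
      assume ne: "p' \<noteq> p0"
      define r where "r = p' - p0"
      have rnz: "r \<noteq> 0" using ne by (simp add: r_def)
      have rann: "peval r M = 0"
        using sp p0ann by (simp add: peval_iff r_def ev_diff[OF emb])
      have "coeff r (degree p0) = 0" using deq sp p0lead by (simp add: r_def)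
      moreover have "degree r \<le> degree p0" using deq by (simp add: r_def degree_diff_le)
      ultimately have "degree r < degree p0"
        using rnz by (metis le_neq_implies_less leading_coeff_0_iff)
      moreover have "degree p' \<le> degree r" using sp rnz rann by blast
      ultimately show False using deq by simp
    qed
  qed
  then show ?thesis using p0lead p0ann by (simp add: peval_iff)
qed

end


lemma ev_deg1:
  assumes e: "is_field_emb emb" and "degree p = 1"
  shows "ev emb z p = emb (coeff p 0) + emb (coeff p 1) * z"
  using assms by (simp add: ev_def poly_altdef degree_map_emb coeff_map_emb atMost_Suc)

context ctx
begin

lemma eig_nonK_struct:
  assumes eig: "e \<in> range d" and nK: "e \<notin> range emb"
  shows "\<exists>y. y \<noteq> 0 \<and> VK emb e = ii * emb y \<and> ImK emb ii e = y
    \<and> conjK emb ii e = emb (HK emb e) - VK emb e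
    \<and> conjK emb ii e \<in> range d \<and> conjK emb ii e \<notin> range emb
    \<and> HK emb (conjK emb ii e) = HK emb e
    \<and> VK emb (conjK emb ii e) = ii * emb (- y) \<and> ImK emb ii (conjK emb ii e) = - y
    \<and> conjK emb ii (conjK emb ii e) = e"
proof -
  obtain k where k: "e = d k" using eig by blast
  have mnz: "minpoly M \<noteq> 0" using minpoly_spec by auto
  have mroot: "ev emb e (minpoly M) = 0" using minpoly_spec k by blast
  obtain p where p: "lead_coeff p = 1" "irreducible p" "ev emb e p = 0"
    using monic_irr_root_exists[OF emb mnz mroot] by blast
  have pnz: "p \<noteq> 0" using p by auto
  have mpK: "mpK emb e = p" using mpK_eq[OF emb p] .
  have "p dvd minpoly M" using irr_dvd[OF emb p(2,3) mroot] .
  then have dle: "degree p \<le> 2" using M_split p(2) unfolding splitting_bound_le_def by blast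
  have dgt: "degree p > 0" using nz_root_deg[OF emb pnz p(3)] .
  have "degree p \<noteq> 1"
  proof
    assume d1: "degree p = 1"
    then have "coeff p 1 = 1" using p(1) by simp
    then have "emb (coeff p 0) + e = 0" using ev_deg1[OF emb d1, of e] p(3) by (simp add: emb_1[OF emb])
    then have "e = emb (- coeff p 0)" by (simp add: emb_uminus[OF emb] eq_neg_iff_add_eq_0 add.commute)
    then show False using nK by blast
  qed
  then have d2: "degree p = 2" using dle dgt by linarith
  define b where "b = coeff p 1"
  define c where "c = coeff p 0"
  have c2: "coeff p 2 = 1" using p(1) d2 by simp
  have quad: "e * e + emb b * e + emb c = 0"
    using ev_deg2[OF emb d2, of e] p(3) c2 by (simp add: b_def c_def emb_1[OF emb] power2_eq_square algebra_simps)
  obtain y where y: "y \<noteq> 0" "e + emb (b / 2) = ii * emb y"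
    using quad_root_struct[OF emb ii K_oqc nK quad] by blast
  have HK: "HK emb e = - (b / 2)" unfolding HK_def mpK using d2 by (simp add: b_def)
  have two: "emb (b / 2) + emb (b / 2) = emb b" by (simp add: emb_add[OF emb, symmetric])
  have VK: "VK emb e = ii * emb y" unfolding VK_def HK using y(2) by (simp add: emb_uminus[OF emb])
  have ImK: "ImK emb ii e = y" using ImK_eq[OF emb ii VK] .
  define w where "w = conjK emb ii e"
  have w1: "w = emb (HK emb e) - VK emb e" unfolding w_def conjK_def ReK_def ImK VK by simp
  have "w = - emb (b / 2) - (e + emb (b / 2))" using w1 HK y(2) VK by (simp add: emb_uminus[OF emb])
  then have "w = - e - (emb (b / 2) + emb (b / 2))" by (simp add: algebra_simps)
  then have w2: "w = - e - emb b" by (simp only: two)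
  have wroot: "ev emb w p = 0"
  proof -
    have "ev emb w p = emb c + emb b * w + w * w"
      using ev_deg2[OF emb d2, of w] c2 by (simp add: b_def c_def emb_1[OF emb] power2_eq_square)
    also have "\<dots> = e * e + emb b * e + emb c" by (simp add: w2 algebra_simps)
    finally show ?thesis using quad by simp
  qed
  have "p dvd CP" using irr_dvd[OF emb p(2,3)] CP_root k by blast
  then obtain t where t: "CP = p * t" by (elim dvdE)
  have "ev emb w CP = 0" using wroot t by (simp add: ev_mult[OF emb])
  then have weig: "w \<in> range d" by (auto simp: ev_CP)
  have wnK: "w \<notin> range emb"
  proof
    assume "w \<in> range emb"
    then obtain x where "w = emb x" by blast
    then have ex: "emb x = - e - emb b" using w2 by simp
    have "- emb x - emb b = e" unfolding ex by simp
    then have "e = emb (- x - b)" by (simp add: emb_diff[OF emb] emb_uminus[OF emb])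
    then show False using nK by blast
  qed
  have mpKw: "mpK emb w = p" using mpK_eq[OF emb p(1,2) wroot] .
  have HKw: "HK emb w = HK emb e" unfolding HK_def mpKw mpK ..
  have VKw: "VK emb w = ii * emb (- y)"
    unfolding VK_def HKw using w1 VK by (simp add: emb_uminus[OF emb])
  have ImKw: "ImK emb ii w = - y" using ImK_eq[OF emb ii VKw] .
  have cw: "conjK emb ii w = e"
    unfolding conjK_def ReK_def ImKw HKw using VK_def[of emb e] VK by (simp add: emb_uminus[OF emb])
  show ?thesis using y(1) VK ImK w1 weig wnK HKw VKw ImKw cw unfolding w_def by blast
qed

end


lemma real_sq1: "(x::real) \<ge> 0 \<Longrightarrow> x * x = 1 \<Longrightarrow> x = 1"
proof -
  assume a: "x \<ge> 0" "x * x = 1"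
  have "(x - 1) * (x + 1) = 0" using a(2) by (simp add: algebra_simps)
  moreover have "x + 1 \<noteq> 0" using a(1) by simp
  ultimately show ?thesis by simp
qed

context
  fixes av :: "'a::field \<Rightarrow> real"
  assumes av: "is_absval av"
begin

lemma av_nonneg: "0 \<le> av x" using av by (simp add: is_absval_def)
lemma av_zero_iff: "av x = 0 \<longleftrightarrow> x = 0" using av by (simp add: is_absval_def)
lemma av_mult: "av (x * y) = av x * av y" using av by (simp add: is_absval_def)
lemma av_triangle: "av (x + y) \<le> av x + av y" using av by (simp add: is_absval_def)
lemma av_0: "av 0 = 0" using av_zero_iff by simp
lemma av_1: "av 1 = 1"
proof -
  have "av 1 = av 1 * av 1" using av_mult[of 1 1] by simp
  moreover have "av 1 \<noteq> 0" using av_zero_iff by simp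
  ultimately show ?thesis by simp
qed
lemma av_m1: "av (-1) = 1"
proof -
  have "av (-1) * av (-1) = 1" using av_mult[of "-1" "-1"] av_1 by simp
  then show ?thesis using av_nonneg[of "-1"] real_sq1 by blast
qed
lemma av_uminus: "av (- x) = av x"
  using av_mult[of "-1" x] av_m1 by simp
lemma av_commute: "av (x - y) = av (y - x)"
  using av_uminus[of "x - y"] by simp
lemma av_power: "av (x ^ n) = av x ^ n"
  by (induction n) (simp_all add: av_1 av_mult)
lemma av_sum_le: "av (sum f S) \<le> sum (\<lambda>x. av (f x)) S"
proof (induction S rule: infinite_finite_induct)
  case (insert x F)
  then show ?case using av_triangle[of "f x" "sum f F"] by simp
qed (simp_all add: av_0)
lemma av_of_nat_le: "av (of_nat n) \<le> of_nat n"
proof (induction n)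
  case (Suc n)
  then show ?case using av_triangle[of 1 "of_nat n"] av_1 by simp
qed (simp add: av_0)
lemma av_ii: "ii * ii = -1 \<Longrightarrow> av ii = 1"
proof -
  assume "ii * ii = -1"
  then have "av ii * av ii = 1" using av_mult[of ii ii] av_m1 by simp
  then show ?thesis using av_nonneg[of ii] real_sq1 by blast
qed

section \<open>Series\<close>

lemma av_sums_unique: "av_sums av s L \<Longrightarrow> av_sums av s L' \<Longrightarrow> L = L'"
proof -
  assume a: "av_sums av s L" "av_sums av s L'"
  let ?S = "\<lambda>N. \<Sum>m<N. s m"
  have t: "(\<lambda>N. av (?S N - L) + av (?S N - L')) \<longlonglongrightarrow> 0 + 0"
    using a unfolding av_sums_def by (intro tendsto_add)
  have "av (L - L') \<le> av (?S N - L) + av (?S N - L')" for N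
    using av_triangle[of "L - ?S N" "?S N - L'"] av_commute[of L "?S N"] by simp
  then have "av (L - L') \<le> 0" using t by (intro LIMSEQ_le_const[OF _]) auto
  then have "av (L - L') = 0" using av_nonneg[of "L - L'"] by simp
  then show "L = L'" using av_zero_iff by simp
qed

lemma av_suminf_eq: "av_sums av s L \<Longrightarrow> av_suminf av s = L"
  unfolding av_suminf_def using av_sums_unique by blast

lemma av_sums_add: "av_sums av s L \<Longrightarrow> av_sums av t L' \<Longrightarrow> av_sums av (\<lambda>m. s m + t m) (L + L')"
  unfolding av_sums_def
proof -
  assume a: "(\<lambda>N. av ((\<Sum>m<N. s m) - L)) \<longlonglongrightarrow> 0" "(\<lambda>N. av ((\<Sum>m<N. t m) - L')) \<longlonglongrightarrow> 0"
  have t: "(\<lambda>N. av ((\<Sum>m<N. s m) - L) + av ((\<Sum>m<N. t m) - L')) \<longlonglongrightarrow> 0"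
    using tendsto_add[OF a] by simp
  have le: "av ((\<Sum>m<N. s m + t m) - (L + L')) \<le> av ((\<Sum>m<N. s m) - L) + av ((\<Sum>m<N. t m) - L')" for N
    using av_triangle[of "(\<Sum>m<N. s m) - L" "(\<Sum>m<N. t m) - L'"] by (simp add: sum.distrib algebra_simps)
  show "(\<lambda>N. av ((\<Sum>m<N. s m + t m) - (L + L'))) \<longlonglongrightarrow> 0"
    by (rule real_tendsto_sandwich[OF _ _ tendsto_const t]) (auto simp: av_nonneg le)
qed

lemma av_sums_cmult: "av_sums av s L \<Longrightarrow> av_sums av (\<lambda>m. c * s m) (c * L)"
  unfolding av_sums_def
proof -
  assume a: "(\<lambda>N. av ((\<Sum>m<N. s m) - L)) \<longlonglongrightarrow> 0"
  have "(\<lambda>N. av c * av ((\<Sum>m<N. s m) - L)) \<longlonglongrightarrow> av c * 0"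
    using a by (intro tendsto_mult tendsto_const)
  moreover have "av ((\<Sum>m<N. c * s m) - c * L) = av c * av ((\<Sum>m<N. s m) - L)" for N
    by (simp add: av_mult[symmetric] sum_distrib_left right_diff_distrib)
  ultimately show "(\<lambda>N. av ((\<Sum>m<N. c * s m) - c * L)) \<longlonglongrightarrow> 0" by simp
qed

lemma av_sums_cmult_right: "av_sums av s L \<Longrightarrow> av_sums av (\<lambda>m. s m * c) (L * c)"
  using av_sums_cmult[of s L c] by (simp add: mult.commute)

lemma av_sums_zero: "av_sums av (\<lambda>m. 0) 0"
  unfolding av_sums_def by (simp add: av_0)

lemma av_sums_sum: "finite I \<Longrightarrow> (\<And>i. i \<in> I \<Longrightarrow> av_sums av (s i) (L i))
   \<Longrightarrow> av_sums av (\<lambda>m. \<Sum>i\<in>I. s i m) (\<Sum>i\<in>I. L i)"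
proof (induction I rule: finite_induct)
  case empty
  then show ?case using av_sums_zero by simp
next
  case (insert x F)
  then show ?case using av_sums_add[of "s x" "L x" "\<lambda>m. \<Sum>i\<in>F. s i m" "\<Sum>i\<in>F. L i"] by simp
qed

lemma av_sums_cong: "(\<And>m. s m = t m) \<Longrightarrow> av_sums av s L \<Longrightarrow> av_sums av t L"
  by (metis ext)

lemma abs_conv:
  assumes complete: "av_complete av" and sm: "summable (\<lambda>m. av (s m))"
  shows "av_sums av s (av_suminf av s)"
proof -
  let ?S = "\<lambda>N. \<Sum>m<N. s m"
  let ?T = "\<lambda>N. \<Sum>m<N. av (s m)"
  have "Cauchy ?T" using sm by (intro LIMSEQ_imp_Cauchy) (rule summable_LIMSEQ)
  have key: "av (?S m - ?S n) \<le> \<bar>?T m - ?T n\<bar>" for m n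
  proof -
    have gen: "av (?S p - ?S q) \<le> \<bar>?T p - ?T q\<bar>" if "q \<le> p" for p q
    proof -
      have "?S p - ?S q = (\<Sum>i\<in>{q..<p}. s i)"
        using sum_diff_nat_ivl[of 0 q p s] that by (simp add: atLeast0LessThan)
      moreover have "?T p - ?T q = (\<Sum>i\<in>{q..<p}. av (s i))"
        using sum_diff_nat_ivl[of 0 q p "\<lambda>i. av (s i)"] that by (simp add: atLeast0LessThan)
      ultimately show ?thesis using av_sum_le[of s "{q..<p}"] by simp
    qed
    show ?thesis
    proof (cases "n \<le> m")
      case True then show ?thesis using gen by blast
    next
      case False
      then have "av (?S n - ?S m) \<le> \<bar>?T n - ?T m\<bar>" using gen by simp
      then show ?thesis by (simp add: av_commute abs_minus_commute)
    qed
  qed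
  have "\<forall>e>0. \<exists>N. \<forall>m\<ge>N. \<forall>k\<ge>N. av (?S m - ?S k) < e"
  proof (intro allI impI)
    fix e :: real assume "e > 0"
    then obtain N where N: "\<forall>m\<ge>N. \<forall>n\<ge>N. norm (?T m - ?T n) < e"
      using CauchyD[OF \<open>Cauchy ?T\<close>] by blast
    have "\<forall>m\<ge>N. \<forall>k\<ge>N. av (?S m - ?S k) < e"
    proof (intro allI impI)
      fix m k assume "m \<ge> N" "k \<ge> N"
      then have "\<bar>?T m - ?T k\<bar> < e" using N by simp
      then show "av (?S m - ?S k) < e" using key[of m k] by linarith
    qed
    then show "\<exists>N. \<forall>m\<ge>N. \<forall>k\<ge>N. av (?S m - ?S k) < e" by blast
  qed
  moreover have "(\<forall>e>0. \<exists>N. \<forall>m\<ge>N. \<forall>k\<ge>N. av (?S m - ?S k) < e) \<longrightarrow>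
     (\<exists>L. (\<lambda>k. av (?S k - L)) \<longlonglongrightarrow> 0)"
    using complete unfolding av_complete_def by (rule spec)
  ultimately have "\<exists>L. (\<lambda>k. av (?S k - L)) \<longlonglongrightarrow> 0" by (rule rev_mp)
  then obtain L where "(\<lambda>k. av (?S k - L)) \<longlonglongrightarrow> 0" by blast
  then have L: "av_sums av s L" by (simp add: av_sums_def)
  have eq: "av_suminf av s = L" using L by (rule av_suminf_eq)
  show ?thesis unfolding eq by (rule L)
qed

lemma Kc_lim:
  assumes "av_sums av s L" and "\<And>N. (\<Sum>m<N. s m) \<in> range emb"
  shows "L \<in> Kc emb av"
  unfolding Kc_def
proof (intro CollectI allI impI)
  fix e :: real assume "e > 0"
  obtain N where "\<forall>n\<ge>N. norm (av ((\<Sum>m<n. s m) - L) - 0) < e"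
    using LIMSEQ_D[OF assms(1)[unfolded av_sums_def] \<open>e > 0\<close>] by blast
  then have lt: "av ((\<Sum>m<N. s m) - L) < e" using av_nonneg by auto
  obtain y where y: "(\<Sum>m<N. s m) = emb y" using assms(2) by blast
  have "av (L - emb y) < e" using lt av_commute[of L "emb y"] y by simp
  then show "\<exists>y. av (L - emb y) < e" by blast
qed

end

lemma conv_summable:
  fixes c :: "nat \<Rightarrow> real"
  assumes "0 \<le> r" "ereal r < conv_radius c"
  shows "summable (\<lambda>m. c m * r ^ m)"
  using summable_in_conv_radius[of r c] assms by simp

lemma conv_summable_n:
  fixes c :: "nat \<Rightarrow> real"
  assumes r0: "0 \<le> r" and rR: "ereal r < conv_radius c" and cnn: "\<And>m. c m \<ge> 0"
  shows "summable (\<lambda>m. of_nat m * c m * r ^ m)"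
proof -
  obtain r' where r': "r < r'" "ereal r' < conv_radius c"
  proof (cases "conv_radius c")
    case (real R)
    then show ?thesis using rR that[of "(r + R) / 2"] by auto
  next
    case PInf
    then show ?thesis using that[of "r + 1"] by auto
  next
    case MInf
    then show ?thesis using rR by auto
  qed
  have r'pos: "r' > 0" using r' r0 by linarith
  have "(\<lambda>n. of_nat n * (r / r') ^ n) \<longlonglongrightarrow> (0::real)"
    using r0 r' by (intro powser_times_n_limit_0) auto
  then obtain N where N: "\<And>n. n \<ge> N \<Longrightarrow> \<bar>of_nat n * (r / r') ^ n\<bar> < 1"
    using LIMSEQ_D[of _ 0 1] by fastforce
  have sm: "summable (\<lambda>m. c m * r' ^ m)" using conv_summable r' r'pos by simp
  show ?thesis
  proof (rule summable_comparison_test'[OF sm])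
    fix n assume "n \<ge> N"
    then have "of_nat n * (r / r') ^ n \<le> 1" using N by fastforce
    then have "of_nat n * r ^ n \<le> r' ^ n" using r'pos by (simp add: power_divide field_simps)
    then have "c n * (of_nat n * r ^ n) \<le> c n * r' ^ n" using cnn by (intro mult_left_mono) auto
    then show "norm (of_nat n * c n * r ^ n) \<le> c n * r' ^ n"
      using cnn r0 by (simp add: mult_ac)
  qed
qed

lemma conv_summable_Suc_n:
  fixes c :: "nat \<Rightarrow> real"
  assumes r0: "0 \<le> r" and rR: "ereal r < conv_radius c" and cnn: "\<And>m. c m \<ge> 0"
  shows "summable (\<lambda>m. c m * (of_nat (Suc m) * r ^ m))"
proof -
  have "summable (\<lambda>m. of_nat m * c m * r ^ m + c m * r ^ m)"
    using conv_summable_n[OF assms] conv_summable[OF r0 rR] by (rule summable_add)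
  then show ?thesis by (simp add: algebra_simps)
qed


section \<open>Even/odd splitting\<close>

definition Sg :: "nat \<Rightarrow> 'a::comm_semiring_1 \<Rightarrow> 'a \<Rightarrow> nat set \<Rightarrow> (nat \<Rightarrow> nat) \<Rightarrow> 'a" where
  "Sg m x y A g = (\<Sum>h\<in>A. of_nat (m choose g h) * x ^ (m - g h) * y ^ (g h))"

definition Ev :: "nat \<Rightarrow> nat set" where "Ev m = {..m div 2}"
definition Od :: "nat \<Rightarrow> nat set" where "Od m = {1..(m + 1) div 2}"
definition ge :: "nat \<Rightarrow> nat" where "ge h = 2 * h"
definition go :: "nat \<Rightarrow> nat" where "go h = 2 * h - 1"

lemma inj_ge: "inj_on ge A" by (auto simp: inj_on_def ge_def)
lemma inj_go: "inj_on go (Od m)" by (auto simp: inj_on_def go_def Od_def)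
lemma ge_sub: "ge ` Ev m \<subseteq> {..m}" by (auto simp: ge_def Ev_def)
lemma go_sub: "go ` Od m \<subseteq> {..m}" by (auto simp: go_def Od_def)
lemma fin_Ev: "finite (Ev m)" by (simp add: Ev_def)
lemma fin_Od: "finite (Od m)" by (simp add: Od_def)

lemma split_set: "{..m} = ge ` Ev m \<union> go ` Od m"
proof (rule set_eqI, rule iffI)
  fix k assume k: "k \<in> {..m}"
  show "k \<in> ge ` Ev m \<union> go ` Od m"
  proof (cases "even k")
    case True
    then have "k = ge (k div 2)" "k div 2 \<in> Ev m" using k by (auto simp: ge_def Ev_def)
    then show ?thesis by blast
  next
    case False
    then have "k = go ((k + 1) div 2)" "(k + 1) div 2 \<in> Od m" using k
      by (auto simp: go_def Od_def elim!: oddE)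
    then show ?thesis by blast
  qed
next
  fix k assume "k \<in> ge ` Ev m \<union> go ` Od m"
  then show "k \<in> {..m}" using ge_sub go_sub by blast
qed

lemma split_disj: "ge ` Ev m \<inter> go ` Od m = {}"
  by (auto simp: ge_def go_def Od_def Ev_def) presburger

lemma split_sum: "(\<Sum>k\<le>m. f k) = (\<Sum>h\<in>Ev m. f (ge h)) + (\<Sum>h\<in>Od m. f (go h))"
proof -
  have "(\<Sum>k\<le>m. f k) = (\<Sum>k\<in>ge ` Ev m. f k) + (\<Sum>k\<in>go ` Od m. f k)"
    unfolding split_set by (rule sum.union_disjoint) (auto simp: fin_Ev fin_Od split_disj)
  also have "\<dots> = (\<Sum>h\<in>Ev m. f (ge h)) + (\<Sum>h\<in>Od m. f (go h))"
    by (simp add: sum.reindex inj_ge inj_go)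
  finally show ?thesis .
qed

lemma binom_split: "(x + y :: 'a::comm_semiring_1) ^ m = Sg m x y (Ev m) ge + Sg m x y (Od m) go"
proof -
  have "(y + x) ^ m = (\<Sum>k\<le>m. of_nat (m choose k) * y ^ k * x ^ (m - k))" by (rule binomial_ring)
  then show ?thesis unfolding Sg_def split_sum by (simp add: add.commute mult_ac)
qed

lemma neg_pow_ge: "(- y :: 'a::comm_ring_1) ^ ge h = y ^ ge h"
  by (simp add: ge_def)
lemma neg_pow_go: "h \<in> Od m \<Longrightarrow> (- y :: 'a::comm_ring_1) ^ go h = - (y ^ go h)"
proof -
  assume "h \<in> Od m"
  then have "go h = Suc (2 * (h - 1))" by (auto simp: go_def Od_def)
  then show ?thesis by simp
qed

lemma binom_split_minus: "(x - y :: 'a::comm_ring_1) ^ m = Sg m x y (Ev m) ge - Sg m x y (Od m) go"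
proof -
  have "(x - y) ^ m = (x + (- y)) ^ m" by simp
  also have "\<dots> = Sg m x (- y) (Ev m) ge + Sg m x (- y) (Od m) go" by (rule binom_split)
  also have "Sg m x (- y) (Ev m) ge = Sg m x y (Ev m) ge" unfolding Sg_def by (simp add: neg_pow_ge)
  also have "Sg m x (- y) (Od m) go = - Sg m x y (Od m) go"
    unfolding Sg_def by (simp add: neg_pow_go sum_negf[symmetric] cong: sum.cong)
  finally show ?thesis by simp
qed

lemma Re_ser_Sg: "Re_ser emb a l m = emb (a m) * Sg m (emb (HK emb l)) (VK emb l) (Ev m) ge"
  unfolding Re_ser_def Sg_def Ev_def ge_def Let_def ..

lemma Im_ser_Sg: "Im_ser emb a l m = emb (a m) * Sg m (emb (HK emb l)) (VK emb l) (Od m) go"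
proof -
  have e: "m + 1 - 2 * h = m - (2 * h - 1)" if "h \<in> Od m" for h using that by (auto simp: Od_def)
  show ?thesis
    unfolding Im_ser_def Sg_def Od_def go_def Let_def using e
    by (auto simp: Od_def intro!: sum.cong)
qed

lemma Re_Im_add: "VK emb l = l - emb (HK emb l) \<Longrightarrow>
  emb (a m) * l ^ m = Re_ser emb a l m + Im_ser emb a l m"
proof -
  have "l = emb (HK emb l) + VK emb l" by (simp add: VK_def)
  then have "l ^ m = (emb (HK emb l) + VK emb l) ^ m" by simp
  then show ?thesis by (simp add: Re_ser_Sg Im_ser_Sg binom_split distrib_left)
qed

lemma Re_Im_diff:
  "emb (a m) * (emb (HK emb l) - VK emb l) ^ m = Re_ser emb a l m - Im_ser emb a l m"
  by (simp add: Re_ser_Sg Im_ser_Sg binom_split_minus right_diff_distrib)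

context
  fixes av :: "'a::field \<Rightarrow> real"
  assumes av: "is_absval av"
begin

lemma Sg_bound_arch:
  assumes fin: "finite A" and inj: "inj_on g A" and sub: "g ` A \<subseteq> {..m}"
  shows "av (Sg m x y A g) \<le> (av x + av y) ^ m"
proof -
  have "av (Sg m x y A g) \<le> (\<Sum>h\<in>A. av (of_nat (m choose g h) * x ^ (m - g h) * y ^ (g h)))"
    unfolding Sg_def by (rule av_sum_le[OF av])
  also have "\<dots> \<le> (\<Sum>h\<in>A. of_nat (m choose g h) * av x ^ (m - g h) * av y ^ (g h))"
    by (intro sum_mono) (simp add: av_mult[OF av] av_power[OF av] av_of_nat_le[OF av]
        mult_right_mono av_nonneg[OF av])
  also have "\<dots> = (\<Sum>k\<in>g ` A. of_nat (m choose k) * av x ^ (m - k) * av y ^ k)"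
    by (simp add: sum.reindex inj)
  also have "\<dots> \<le> (\<Sum>k\<le>m. of_nat (m choose k) * av x ^ (m - k) * av y ^ k)"
    by (intro sum_mono2) (auto simp: sub av_nonneg[OF av])
  also have "\<dots> = (av y + av x) ^ m" by (simp add: binomial_ring mult_ac)
  finally show ?thesis by (simp add: add.commute)
qed

lemma Sg_bound_na:
  assumes fin: "finite A" and inj: "inj_on g A" and sub: "g ` A \<subseteq> {..m}"
    and na: "\<And>n. av (of_nat n) \<le> 1"
  shows "av (Sg m x y A g) \<le> of_nat (Suc m) * max (av x) (av y) ^ m"
proof -
  let ?r = "max (av x) (av y)"
  have "av (Sg m x y A g) \<le> (\<Sum>h\<in>A. av (of_nat (m choose g h) * x ^ (m - g h) * y ^ (g h)))"
    unfolding Sg_def by (rule av_sum_le[OF av])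
  also have "\<dots> \<le> (\<Sum>h\<in>A. ?r ^ m)"
  proof (intro sum_mono)
    fix h assume h: "h \<in> A"
    then have gm: "g h \<le> m" using sub by auto
    have r0: "0 \<le> ?r" using av_nonneg[OF av, of x] by simp
    have "av x ^ (m - g h) * av y ^ (g h) \<le> ?r ^ (m - g h) * ?r ^ (g h)"
      by (intro mult_mono power_mono) (auto simp: av_nonneg[OF av] r0)
    also have "\<dots> = ?r ^ m" using gm by (simp add: power_add[symmetric])
    finally have le: "av x ^ (m - g h) * av y ^ (g h) \<le> ?r ^ m" .
    have "av (of_nat (m choose g h) * x ^ (m - g h) * y ^ (g h))
        = av (of_nat (m choose g h)) * (av x ^ (m - g h) * av y ^ (g h))"
      by (simp add: av_mult[OF av] av_power[OF av])
    also have "\<dots> \<le> 1 * (?r ^ m)"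
      using na le by (intro mult_mono) (auto simp: av_nonneg[OF av])
    finally show "av (of_nat (m choose g h) * x ^ (m - g h) * y ^ (g h)) \<le> ?r ^ m" by simp
  qed
  also have "\<dots> = of_nat (card A) * ?r ^ m" by simp
  also have "\<dots> \<le> of_nat (Suc m) * ?r ^ m"
  proof -
    have "card A = card (g ` A)" using card_image[OF inj] by simp
    also have "\<dots> \<le> card {..m}" using sub by (intro card_mono) auto
    finally have "card A \<le> Suc m" by simp
    moreover have "0 \<le> ?r" using av_nonneg[OF av, of x] by simp
    ultimately show ?thesis by (intro mult_right_mono) auto
  qed
  finally show ?thesis .
qed

end


lemma nonarch_of_nat:
  assumes e: "is_field_emb emb" and av: "is_absval av" and na: "nonarch emb av"
  shows "av (of_nat n :: 'a::field) \<le> 1"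
proof (induction n)
  case 0 then show ?case by (simp add: av_0[OF av])
next
  case (Suc n)
  have "av (of_nat (Suc n) :: 'a) = av (emb (of_nat n) + emb 1)"
    by (simp add: emb_of_nat[OF e] emb_1[OF e] add.commute)
  also have "\<dots> \<le> max (av (emb (of_nat n))) (av (emb 1))"
    using na unfolding nonarch_def by blast
  also have "\<dots> \<le> 1" using Suc by (simp add: emb_of_nat[OF e] emb_1[OF e] av_1[OF av])
  finally show ?case .
qed

locale ctx2 = ctx emb ii M P Q d
  for emb :: "'k::linordered_field \<Rightarrow> 'a::field" and ii :: 'a
    and M :: "'k^'n^'n" and P Q :: "'a^'n^'n" and d :: "'n \<Rightarrow> 'a" +
  fixes av :: "'a \<Rightarrow> real" and a :: "nat \<Rightarrow> 'k"
  assumes av: "is_absval av" and complete: "av_complete av" and M_Omega: "M \<in> Omega_hat emb av a"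
begin

abbreviation "cc \<equiv> (\<lambda>m. av (emb (a m)))"

lemma cc_nonneg: "cc m \<ge> 0" by (simp add: av_nonneg[OF av])

lemma Rf_eq: "Rf emb av a = conv_radius cc" by (simp add: Rf_def)

lemma eig_lt: "z \<in> range d \<Longrightarrow> ereal (av z) < Rf emb av a"
proof -
  assume z: "z \<in> range d"
  have "av z \<le> spec_rad emb av M"
    unfolding spec_rad_def eigs_eq using z by (intro Max_ge) auto
  then have "ereal (av z) \<le> ereal (spec_rad emb av M)" by simp
  moreover have "ereal (spec_rad emb av M) < Rf emb av a" using M_Omega unfolding Omega_hat_def by blast
  ultimately show ?thesis by (rule le_less_trans)
qed

lemma zero_lt: "ereal (av 0) < Rf emb av a"
proof -
  obtain k :: 'n where True by blast
  have "ereal (av 0) \<le> ereal (av (d k))" by (simp add: av_0[OF av] av_nonneg[OF av])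
  also have "\<dots> < Rf emb av a" using eig_lt by simp
  finally show ?thesis .
qed

lemma fK_sums:
  assumes z: "ereal (av z) < Rf emb av a"
  shows "av_sums av (\<lambda>m. emb (a m) * z ^ m) (fK emb av a z)"
proof -
  have "summable (\<lambda>m. cc m * av z ^ m)"
    using z by (intro conv_summable) (auto simp: av_nonneg[OF av] Rf_eq)
  then have "summable (\<lambda>m. av (emb (a m) * z ^ m))"
    by (simp add: av_mult[OF av] av_power[OF av])
  then show ?thesis unfolding fK_def by (rule abs_conv[OF av complete])
qed

lemma fK_Kc:
  assumes z: "ereal (av z) < Rf emb av a" and zK: "z \<in> range emb"
  shows "fK emb av a z \<in> Kc emb av"
proof (rule Kc_lim[OF av fK_sums[OF z]])
  fix N
  obtain x where x: "z = emb x" using zK by blast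
  have "(\<Sum>m<N. emb (a m) * z ^ m) = emb (\<Sum>m<N. a m * x ^ m)"
    by (simp add: x emb_sum[OF emb] emb_mult[OF emb] emb_power[OF emb])
  then show "(\<Sum>m<N. emb (a m) * z ^ m) \<in> range emb" by simp
qed

lemma Omega_l: "l \<in> range d \<Longrightarrow> (if nonarch emb av
         then ereal (max (av (emb (HK emb l))) (av (VK emb l))) < Rf emb av a
         else ereal (av (emb (HK emb l)) + av (VK emb l)) < Rf emb av a)"
proof -
  assume l: "l \<in> range d"
  have "\<forall>l\<in>eigs emb M. (if nonarch emb av
         then ereal (max (av (emb (HK emb l))) (av (VK emb l))) < Rf emb av a
         else ereal (av (emb (HK emb l)) + av (VK emb l)) < Rf emb av a)"
    using M_Omega unfolding Omega_hat_def by blast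
  then show ?thesis using l unfolding eigs_eq by blast
qed

lemma Sg_summable:
  assumes l: "l \<in> range d" and fin: "\<And>m. finite (A m)" and inj: "\<And>m. inj_on g (A m)"
    and sub: "\<And>m. g ` A m \<subseteq> {..m}"
  shows "summable (\<lambda>m. av (emb (a m) * Sg m (emb (HK emb l)) (VK emb l) (A m) g))"
proof (cases "nonarch emb av")
  case True
  let ?r = "max (av (emb (HK emb l))) (av (VK emb l))"
  have r0: "0 \<le> ?r" using av_nonneg[OF av, of "VK emb l"] by simp
  have rR: "ereal ?r < conv_radius cc" using Omega_l[OF l] True by (simp add: Rf_eq)
  have "summable (\<lambda>m. cc m * (of_nat (Suc m) * ?r ^ m))"
    by (rule conv_summable_Suc_n[OF r0 rR cc_nonneg])
  then show ?thesis
  proof (rule summable_comparison_test'[where N = 0])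
    fix m :: nat
    have "av (Sg m (emb (HK emb l)) (VK emb l) (A m) g) \<le> of_nat (Suc m) * ?r ^ m"
      using Sg_bound_na[OF av fin inj sub nonarch_of_nat[OF emb av True]] .
    then show "norm (av (emb (a m) * Sg m (emb (HK emb l)) (VK emb l) (A m) g))
        \<le> cc m * (of_nat (Suc m) * ?r ^ m)"
      by (simp add: av_mult[OF av] av_nonneg[OF av] mult_left_mono)
  qed
next
  case False
  let ?r = "av (emb (HK emb l)) + av (VK emb l)"
  have r0: "0 \<le> ?r" using av_nonneg[OF av] by (simp add: add_nonneg_nonneg)
  have rR: "ereal ?r < conv_radius cc" using Omega_l[OF l] False by (simp add: Rf_eq)
  have "summable (\<lambda>m. cc m * ?r ^ m)" by (rule conv_summable[OF r0 rR])
  then show ?thesis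
  proof (rule summable_comparison_test'[where N = 0])
    fix m :: nat
    have "av (Sg m (emb (HK emb l)) (VK emb l) (A m) g) \<le> ?r ^ m"
      using Sg_bound_arch[OF av fin inj sub] .
    then show "norm (av (emb (a m) * Sg m (emb (HK emb l)) (VK emb l) (A m) g)) \<le> cc m * ?r ^ m"
      by (simp add: av_mult[OF av] av_nonneg[OF av] mult_left_mono)
  qed
qed

lemma Re_sums: "l \<in> range d \<Longrightarrow> av_sums av (Re_ser emb a l) (Ref emb av a l)"
  unfolding Ref_def
  by (rule abs_conv[OF av complete])
     (simp add: Re_ser_Sg Sg_summable fin_Ev inj_ge ge_sub)

lemma Im_sums: "l \<in> range d \<Longrightarrow> av_sums av (Im_ser emb a l) (av_suminf av (Im_ser emb a l))"
  by (rule abs_conv[OF av complete])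
     (simp add: Im_ser_Sg Sg_summable fin_Od inj_go go_sub)

end


lemma pow_even:
  assumes e: "is_field_emb emb" and ii: "ii * ii = -1"
  shows "(ii * emb y) ^ (ge h) = emb ((- (y * y)) ^ h)"
proof -
  have "(ii * emb y) ^ 2 = (ii * ii) * (emb y * emb y)" by (simp add: power2_eq_square mult_ac)
  also have "\<dots> = emb (- (y * y))" using ii by (simp add: emb_uminus[OF e] emb_mult[OF e])
  finally have "(ii * emb y) ^ 2 = emb (- (y * y))" .
  then show ?thesis by (simp add: ge_def power_mult emb_power[OF e])
qed

lemma pow_odd:
  assumes e: "is_field_emb emb" and ii: "ii * ii = -1" and h: "h \<in> Od m"
  shows "(ii * emb y) ^ (go h) = ii * emb (y * (- (y * y)) ^ (h - 1))"
proof -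
  have g: "go h = Suc (ge (h - 1))" using h by (auto simp: go_def ge_def Od_def)
  show ?thesis unfolding g using pow_even[OF e ii, of y "h - 1"] by (simp add: emb_mult[OF e] mult_ac)
qed

lemma Sg_even_range:
  assumes e: "is_field_emb emb" and ii: "ii * ii = -1"
  shows "Sg m (emb x) (ii * emb y) (Ev m) ge = emb (\<Sum>h\<in>Ev m. of_nat (m choose ge h) * x ^ (m - ge h) * (- (y * y)) ^ h)"
  unfolding Sg_def using pow_even[OF e ii]
  by (simp add: emb_sum[OF e] emb_mult[OF e] emb_power[OF e] emb_of_nat[OF e])

lemma Sg_odd_range:
  assumes e: "is_field_emb emb" and ii: "ii * ii = -1"
  shows "Sg m (emb x) (ii * emb y) (Od m) go = ii * emb (\<Sum>h\<in>Od m. of_nat (m choose go h) * x ^ (m - go h) * (y * (- (y * y)) ^ (h - 1)))"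
  unfolding Sg_def using pow_odd[OF e ii]
  by (simp add: emb_sum[OF e] emb_mult[OF e] emb_power[OF e] emb_of_nat[OF e] sum_distrib_left mult_ac
      cong: sum.cong)

context ctx2
begin

lemma Lam_props: "l \<in> Lam emb ii M \<Longrightarrow> l \<in> range d \<and> l \<notin> range emb \<and> 0 < ImK emb ii l"
  unfolding Lam_def eigs_eq by blast

lemma Lam_data:
  assumes l: "l \<in> Lam emb ii M"
  obtains y where "y \<noteq> 0" "VK emb l = ii * emb y" "ImK emb ii l = y"
    "conjK emb ii l = emb (HK emb l) - VK emb l"
    "conjK emb ii l \<in> range d" "conjK emb ii l \<notin> range emb"
    "HK emb (conjK emb ii l) = HK emb l"
    "VK emb (conjK emb ii l) = ii * emb (- y)" "ImK emb ii (conjK emb ii l) = - y"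
    "conjK emb ii (conjK emb ii l) = l"
  using eig_nonK_struct[of l] Lam_props[OF l] by blast

lemma Ref_Kc:
  assumes l: "l \<in> Lam emb ii M"
  shows "Ref emb av a l \<in> Kc emb av"
proof -
  obtain y where y: "VK emb l = ii * emb y" using Lam_data[OF l] by blast
  have ld: "l \<in> range d" using Lam_props[OF l] by blast
  show ?thesis
  proof (rule Kc_lim[OF av Re_sums[OF ld]])
    fix N
    have "Re_ser emb a l m \<in> range emb" for m
    proof -
      have "Re_ser emb a l m = emb (a m) * emb (\<Sum>h\<in>Ev m. of_nat (m choose ge h) * HK emb l ^ (m - ge h) * (- (y * y)) ^ h)"
        by (simp add: Re_ser_Sg y Sg_even_range[OF emb ii])
      then show ?thesis by (simp add: emb_mult[OF emb, symmetric])
    qed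
    then have "\<forall>m. \<exists>t. Re_ser emb a l m = emb t" by blast
    then obtain T where T: "\<And>m. Re_ser emb a l m = emb (T m)" by metis
    show "(\<Sum>m<N. Re_ser emb a l m) \<in> range emb" by (simp add: T emb_sum[OF emb, symmetric])
  qed
qed

lemma Im_emb:
  assumes l: "l \<in> Lam emb ii M"
  obtains T where "\<And>m. Im_ser emb a l m = ii * emb (T m)"
proof -
  obtain y where y: "VK emb l = ii * emb y" using Lam_data[OF l] by blast
  have "\<exists>t. Im_ser emb a l m = ii * emb t" for m
  proof -
    have "Im_ser emb a l m = emb (a m) * (ii * emb (\<Sum>h\<in>Od m. of_nat (m choose go h) * HK emb l ^ (m - go h) * (y * (- (y * y)) ^ (h - 1))))"
      by (simp add: Im_ser_Sg y Sg_odd_range[OF emb ii])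
    also have "\<dots> = ii * emb (a m * (\<Sum>h\<in>Od m. of_nat (m choose go h) * HK emb l ^ (m - go h) * (y * (- (y * y)) ^ (h - 1))))"
      by (simp add: emb_mult[OF emb] mult_ac)
    finally show ?thesis by blast
  qed
  then obtain T where "\<And>m. Im_ser emb a l m = ii * emb (T m)" by metis
  then show ?thesis using that by blast
qed

lemma Imf_Kc:
  assumes l: "l \<in> Lam emb ii M"
  shows "Imf emb av ii a l \<in> Kc emb av"
proof -
  have ld: "l \<in> range d" using Lam_props[OF l] by blast
  obtain T where T: "\<And>m. Im_ser emb a l m = ii * emb (T m)" using Im_emb[OF l] by blast
  have s: "av_sums av (\<lambda>m. - ii * Im_ser emb a l m) (- ii * av_suminf av (Im_ser emb a l))"
    by (rule av_sums_cmult[OF av Im_sums[OF ld]])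
  have eq: "- ii * Im_ser emb a l m = emb (T m)" for m
    using ii by (simp add: T mult.assoc[symmetric])
  show ?thesis unfolding Imf_def
  proof (rule Kc_lim[OF av s])
    fix N
    have "(\<Sum>m<N. - ii * Im_ser emb a l m) = emb (\<Sum>m<N. T m)" by (simp only: eq emb_sum[OF emb])
    then show "(\<Sum>m<N. - ii * Im_ser emb a l m) \<in> range emb" by simp
  qed
qed

lemma fK_Lam:
  assumes l: "l \<in> Lam emb ii M"
  shows "fK emb av a l = Ref emb av a l + ii * Imf emb av ii a l"
proof -
  have ld: "l \<in> range d" using Lam_props[OF l] by blast
  let ?I = "av_suminf av (Im_ser emb a l)"
  have "av_sums av (\<lambda>m. Re_ser emb a l m + Im_ser emb a l m) (Ref emb av a l + ?I)"
    by (rule av_sums_add[OF av Re_sums[OF ld] Im_sums[OF ld]])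
  then have "av_sums av (\<lambda>m. emb (a m) * l ^ m) (Ref emb av a l + ?I)"
    by (simp add: Re_Im_add VK_def)
  then have "fK emb av a l = Ref emb av a l + ?I" unfolding fK_def by (rule av_suminf_eq[OF av])
  moreover have "ii * Imf emb av ii a l = ?I" using ii by (simp add: Imf_def mult.assoc[symmetric])
  ultimately show ?thesis by simp
qed

lemma fK_conj:
  assumes l: "l \<in> Lam emb ii M"
  shows "fK emb av a (conjK emb ii l) = Ref emb av a l - ii * Imf emb av ii a l"
proof -
  have ld: "l \<in> range d" using Lam_props[OF l] by blast
  have cj: "conjK emb ii l = emb (HK emb l) - VK emb l" using Lam_data[OF l] by blast
  let ?I = "av_suminf av (Im_ser emb a l)"
  have "av_sums av (\<lambda>m. Re_ser emb a l m + (-1) * Im_ser emb a l m) (Ref emb av a l + (-1) * ?I)"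
    by (rule av_sums_add[OF av Re_sums[OF ld] av_sums_cmult[OF av Im_sums[OF ld]]])
  then have "av_sums av (\<lambda>m. emb (a m) * (conjK emb ii l) ^ m) (Ref emb av a l - ?I)"
    by (simp add: cj Re_Im_diff)
  then have "fK emb av a (conjK emb ii l) = Ref emb av a l - ?I" unfolding fK_def by (rule av_suminf_eq[OF av])
  moreover have "ii * Imf emb av ii a l = ?I" using ii by (simp add: Imf_def mult.assoc[symmetric])
  ultimately show ?thesis by simp
qed

end


lemma sum_single: "finite S \<Longrightarrow> x \<in> S \<Longrightarrow> (\<And>z. z \<in> S \<Longrightarrow> z \<noteq> x \<Longrightarrow> f z = 0) \<Longrightarrow> sum f S = f x"
  by (metis (no_types, lifting) sum.remove sum.neutral add.right_neutral DiffE insertI1 insert_Diff)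

context ctx2
begin

definition ind :: "'a \<Rightarrow> 'a \<Rightarrow> 'a" where "ind \<mu> e = (if e = \<mu> then 1 else 0)"

definition eb :: "'a \<Rightarrow> 'a \<Rightarrow> 'a" where "eb l e = ii * (ind l e - ind (conjK emb ii l) e)"

lemma finite_eigs: "finite (eigs emb M)" by (simp add: eigs_eq)

lemma frob_cov_eq: "frob_cov emb M \<mu> = cj P Q (dg (\<lambda>k. ind \<mu> (d k)))"
proof -
  have "frob_cov emb M \<mu> = cj P Q (dg (\<lambda>k. poly (\<Prod>\<nu>\<in>eigs emb M - {\<mu>}. smult (1 / (\<mu> - \<nu>)) [:- \<nu>, 1:]) (d k)))"
    unfolding frob_cov_def A_eq by (simp add: peval_cj[OF PQ QP] peval_dg)
  also have "(\<lambda>k. poly (\<Prod>\<nu>\<in>eigs emb M - {\<mu>}. smult (1 / (\<mu> - \<nu>)) [:- \<nu>, 1:]) (d k)) = (\<lambda>k. ind \<mu> (d k))"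
  proof
    fix k
    have p: "poly (\<Prod>\<nu>\<in>eigs emb M - {\<mu>}. smult (1 / (\<mu> - \<nu>)) [:- \<nu>, 1:]) (d k)
        = (\<Prod>\<nu>\<in>eigs emb M - {\<mu>}. (1 / (\<mu> - \<nu>)) * (d k - \<nu>))"
      by (simp add: poly_prod diff_divide_distrib)
    show "poly (\<Prod>\<nu>\<in>eigs emb M - {\<mu>}. smult (1 / (\<mu> - \<nu>)) [:- \<nu>, 1:]) (d k) = ind \<mu> (d k)"
    proof (cases "d k = \<mu>")
      case True
      then have "(\<Prod>\<nu>\<in>eigs emb M - {\<mu>}. (1 / (\<mu> - \<nu>)) * (d k - \<nu>)) = (\<Prod>\<nu>\<in>eigs emb M - {\<mu>}. 1)"
        by (intro prod.cong) auto
      then show ?thesis using p True by (simp add: ind_def)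
    next
      case False
      have "d k \<in> eigs emb M - {\<mu>}" using False by (simp add: eigs_eq)
      then have "(\<Prod>\<nu>\<in>eigs emb M - {\<mu>}. (1 / (\<mu> - \<nu>)) * (d k - \<nu>)) = 0"
        using finite_eigs by (intro prod_zero) auto
      then show ?thesis using p False by (simp add: ind_def)
    qed
  qed
  finally show ?thesis .
qed

lemma Bmat_eq: "Bmat emb ii M l = cj P Q (dg (\<lambda>k. eb l (d k)))"
  unfolding Bmat_def frob_cov_eq eb_def
  by (simp only: cj_diff[symmetric] cj_smat dg_diff smat_dg)

lemma BB_eq: "Bmat emb ii M l ** Bmat emb ii M l = cj P Q (dg (\<lambda>k. eb l (d k) * eb l (d k)))"
  unfolding Bmat_eq by (simp only: cj_mult[OF QP] dg_mult)

lemma mat1_eq: "mat 1 = cj P Q (dg (\<lambda>k. 1))"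
  using cj_one[OF PQ] by (simp add: mat_dg)

lemma A0_eq: "A0mat emb ii M = cj P Q (dg (\<lambda>k. 1 - (\<Sum>g\<in>Gam emb M. ind g (d k))
     + (\<Sum>l\<in>Lam emb ii M. eb l (d k) * eb l (d k))))"
  unfolding A0mat_def Amat_def frob_cov_eq BB_eq mat1_eq
  by (simp only: cj_sum[symmetric] dg_sum cj_diff[symmetric] cj_add[symmetric] dg_diff dg_add)

definition psi :: "'a \<Rightarrow> 'a" where
  "psi e = fK emb av a 0 * (1 - (\<Sum>g\<in>Gam emb M. ind g e) + (\<Sum>l\<in>Lam emb ii M. eb l e * eb l e))
     + (\<Sum>g\<in>Gam emb M. fK emb av a g * ind g e)
     - (\<Sum>l\<in>Lam emb ii M. Ref emb av a l * (eb l e * eb l e))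
     + (\<Sum>l\<in>Lam emb ii M. Imf emb av ii a l * eb l e)"

lemma RHS_eq:
  "smat (fK emb av a 0) (A0mat emb ii M)
      + (\<Sum>g\<in>Gam emb M. smat (fK emb av a g) (Amat emb M g))
      - (\<Sum>l\<in>Lam emb ii M. smat (Ref emb av a l) (Bmat emb ii M l ** Bmat emb ii M l))
      + (\<Sum>l\<in>Lam emb ii M. smat (Imf emb av ii a l) (Bmat emb ii M l))
   = cj P Q (dg (\<lambda>k. psi (d k)))"
  unfolding A0_eq Amat_def frob_cov_eq BB_eq
  unfolding Bmat_eq psi_def
  by (simp only: cj_smat smat_dg cj_sum[symmetric] dg_sum cj_diff[symmetric] cj_add[symmetric]
      dg_diff dg_add)

end


context ctx2
begin

lemma finite_Gam: "finite (Gam emb M)"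
  using finite_eigs unfolding Gam_def by simp
lemma finite_Lam: "finite (Lam emb ii M)"
  using finite_eigs unfolding Lam_def by simp

lemma conj_not_Lam: "l \<in> Lam emb ii M \<Longrightarrow> conjK emb ii l \<notin> Lam emb ii M"
proof
  assume l: "l \<in> Lam emb ii M" and c: "conjK emb ii l \<in> Lam emb ii M"
  obtain y where y: "ImK emb ii l = y" "ImK emb ii (conjK emb ii l) = - y" using Lam_data[OF l] by blast
  have "0 < y" using Lam_props[OF l] y by simp
  moreover have "0 < - y" using Lam_props[OF c] y by simp
  ultimately show False by simp
qed

lemma psi_eq:
  assumes e: "e \<in> range d"
  shows "psi e = fK emb av a e"
proof (cases "e \<in> range emb")
  case True
  have eb0: "eb l e = 0" if l: "l \<in> Lam emb ii M" for l
  proof -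
    have "l \<notin> range emb" using Lam_props[OF l] by blast
    moreover have "conjK emb ii l \<notin> range emb" using Lam_data[OF l] by blast
    ultimately have "e \<noteq> l" "e \<noteq> conjK emb ii l" using True by metis+
    then show ?thesis by (simp add: eb_def ind_def)
  qed
  have L0: "(\<Sum>l\<in>Lam emb ii M. eb l e * eb l e) = 0"
           "(\<Sum>l\<in>Lam emb ii M. Ref emb av a l * (eb l e * eb l e)) = 0"
           "(\<Sum>l\<in>Lam emb ii M. Imf emb av ii a l * eb l e) = 0"
    by (simp_all add: eb0)
  show ?thesis
  proof (cases "e = 0")
    case True
    have "ind g e = 0" if "g \<in> Gam emb M" for g using that True by (auto simp: Gam_def ind_def)
    then show ?thesis using True unfolding psi_def L0 by simp
  next
    case False
    then have eG: "e \<in> Gam emb M" using True e by (simp add: Gam_def eigs_eq)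
    have s1: "(\<Sum>g\<in>Gam emb M. ind g e) = ind e e"
      by (rule sum_single[OF finite_Gam eG]) (auto simp: ind_def)
    have s2: "(\<Sum>g\<in>Gam emb M. fK emb av a g * ind g e) = fK emb av a e * ind e e"
      by (rule sum_single[OF finite_Gam eG]) (auto simp: ind_def)
    show ?thesis unfolding psi_def L0 s1 s2 by (simp add: ind_def)
  qed
next
  case False
  obtain y where y: "y \<noteq> 0" "ImK emb ii e = y" "conjK emb ii e \<in> range d"
    "conjK emb ii e \<notin> range emb" "ImK emb ii (conjK emb ii e) = - y"
    "conjK emb ii (conjK emb ii e) = e"
    using eig_nonK_struct[OF e False] by blast
  have G0: "(\<Sum>g\<in>Gam emb M. ind g e) = 0" "(\<Sum>g\<in>Gam emb M. fK emb av a g * ind g e) = 0"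
    using False by (auto simp: Gam_def ind_def intro!: sum.neutral)
  show ?thesis
  proof (cases "y > 0")
    case True
    then have eL: "e \<in> Lam emb ii M" using e False y by (simp add: Lam_def eigs_eq)
    have ebl: "eb l e = ii * ind l e" if l: "l \<in> Lam emb ii M" for l
    proof -
      have "conjK emb ii l \<noteq> e" using conj_not_Lam[OF l] eL by blast
      then show ?thesis by (simp add: eb_def ind_def)
    qed
    have s1: "(\<Sum>l\<in>Lam emb ii M. eb l e * eb l e) = eb e e * eb e e"
      by (rule sum_single[OF finite_Lam eL]) (auto simp: ebl ind_def)
    have s2: "(\<Sum>l\<in>Lam emb ii M. Ref emb av a l * (eb l e * eb l e)) = Ref emb av a e * (eb e e * eb e e)"
      by (rule sum_single[OF finite_Lam eL]) (auto simp: ebl ind_def)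
    have s3: "(\<Sum>l\<in>Lam emb ii M. Imf emb av ii a l * eb l e) = Imf emb av ii a e * eb e e"
      by (rule sum_single[OF finite_Lam eL]) (auto simp: ebl ind_def)
    have ee: "eb e e = ii" using ebl[OF eL] by (simp add: ind_def)
    show ?thesis unfolding psi_def G0 s1 s2 s3 ee fK_Lam[OF eL] using ii
      by (simp add: algebra_simps)
  next
    case False
    then have yn: "y < 0" using y(1) by simp
    define l0 where "l0 = conjK emb ii e"
    have l0L: "l0 \<in> Lam emb ii M" using y yn by (simp add: l0_def Lam_def eigs_eq)
    have cl0: "conjK emb ii l0 = e" using y(6) by (simp add: l0_def)
    have eL: "e \<notin> Lam emb ii M" using y(2) yn by (simp add: Lam_def)
    have ebl: "eb l e = 0" if l: "l \<in> Lam emb ii M" "l \<noteq> l0" for l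
    proof -
      have "l \<noteq> e" using l eL by blast
      moreover have "conjK emb ii l \<noteq> e"
      proof
        assume "conjK emb ii l = e"
        then have "conjK emb ii (conjK emb ii l) = l0" by (simp add: l0_def)
        moreover have "conjK emb ii (conjK emb ii l) = l" using Lam_data[OF l(1)] by blast
        ultimately show False using l(2) by simp
      qed
      ultimately show ?thesis by (simp add: eb_def ind_def)
    qed
    have l0e: "l0 \<noteq> e" using eL l0L by blast
    have ebl0: "eb l0 e = - ii" using cl0 l0e by (simp add: eb_def ind_def)
    have z: "ind l0 e = 0" using l0e by (simp add: ind_def)
    have s1: "(\<Sum>l\<in>Lam emb ii M. eb l e * eb l e) = eb l0 e * eb l0 e"
      by (rule sum_single[OF finite_Lam l0L]) (auto simp: ebl z)
    have s2: "(\<Sum>l\<in>Lam emb ii M. Ref emb av a l * (eb l e * eb l e)) = Ref emb av a l0 * (eb l0 e * eb l0 e)"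
      by (rule sum_single[OF finite_Lam l0L]) (auto simp: ebl z)
    have s3: "(\<Sum>l\<in>Lam emb ii M. Imf emb av ii a l * eb l e) = Imf emb av ii a l0 * eb l0 e"
      by (rule sum_single[OF finite_Lam l0L]) (auto simp: ebl z)
    have fe: "fK emb av a e = Ref emb av a l0 - ii * Imf emb av ii a l0"
      using fK_conj[OF l0L] cl0 by simp
    show ?thesis unfolding psi_def G0 s1 s2 s3 ebl0 fe using ii
      by (simp add: algebra_simps)
  qed
qed

lemma series_entry:
  "smat (emb (a m)) (mpow (mapM emb M) m) $ i $ j = (\<Sum>k\<in>UNIV. P $ i $ k * (emb (a m) * d k ^ m) * Q $ k $ j)"
proof -
  have "smat (emb (a m)) (mpow (mapM emb M) m) = cj P Q (dg (\<lambda>k. emb (a m) * d k ^ m))"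
    unfolding A_eq by (simp only: mpow_cj[OF PQ QP] mpow_dg cj_smat smat_dg)
  then show ?thesis by (simp add: cj_dg_nth)
qed

lemma series_sums:
  "mat_av_sums av (\<lambda>m. smat (emb (a m)) (mpow (mapM emb M) m)) (cj P Q (dg (\<lambda>k. fK emb av a (d k))))"
  unfolding mat_av_sums_def
proof (intro allI)
  fix i j
  have "av_sums av (\<lambda>m. \<Sum>k\<in>UNIV. P $ i $ k * (emb (a m) * d k ^ m) * Q $ k $ j)
          (\<Sum>k\<in>UNIV. P $ i $ k * fK emb av a (d k) * Q $ k $ j)"
  proof (rule av_sums_sum[OF av])
    fix k :: 'n
    have "av_sums av (\<lambda>m. emb (a m) * d k ^ m) (fK emb av a (d k))"
      by (rule fK_sums[OF eig_lt]) simp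
    then show "av_sums av (\<lambda>m. P $ i $ k * (emb (a m) * d k ^ m) * Q $ k $ j)
          (P $ i $ k * fK emb av a (d k) * Q $ k $ j)"
      by (intro av_sums_cmult_right[OF av] av_sums_cmult[OF av])
  qed simp
  then show "av_sums av (\<lambda>m. smat (emb (a m)) (mpow (mapM emb M) m) $ i $ j)
     (cj P Q (dg (\<lambda>k. fK emb av a (d k))) $ i $ j)"
    by (simp add: series_entry cj_dg_nth)
qed

lemma main:
  "(\<forall>g \<in> insert 0 (Gam emb M).
            av_summable av (\<lambda>m. emb (a m) * g ^ m) \<and> fK emb av a g \<in> Kc emb av)
       \<and> (\<forall>l \<in> Lam emb ii M.
            av_summable av (Re_ser emb a l) \<and> Ref emb av a l \<in> Kc emb av
          \<and> av_summable av (Im_ser emb a l) \<and> Imf emb av ii a l \<in> Kc emb av)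
       \<and> mat_av_sums av (\<lambda>m. smat (emb (a m)) (mpow (mapM emb M) m))
           (smat (fK emb av a 0) (A0mat emb ii M)
            + (\<Sum>g\<in>Gam emb M. smat (fK emb av a g) (Amat emb M g))
            - (\<Sum>l\<in>Lam emb ii M. smat (Ref emb av a l) (Bmat emb ii M l ** Bmat emb ii M l))
            + (\<Sum>l\<in>Lam emb ii M. smat (Imf emb av ii a l) (Bmat emb ii M l)))"
proof (intro conjI ballI)
  fix g assume g: "g \<in> insert 0 (Gam emb M)"
  have lt: "ereal (av g) < Rf emb av a" and gK: "g \<in> range emb"
  proof -
    show "ereal (av g) < Rf emb av a"
      using g zero_lt eig_lt by (auto simp: Gam_def eigs_eq)
    show "g \<in> range emb" using g emb_0[OF emb] by (auto simp: Gam_def)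
  qed
  show "av_summable av (\<lambda>m. emb (a m) * g ^ m)"
    unfolding av_summable_def using fK_sums[OF lt] by blast
  show "fK emb av a g \<in> Kc emb av" by (rule fK_Kc[OF lt gK])
next
  fix l assume l: "l \<in> Lam emb ii M"
  have ld: "l \<in> range d" using Lam_props[OF l] by blast
  show "av_summable av (Re_ser emb a l)" unfolding av_summable_def using Re_sums[OF ld] by blast
  show "av_summable av (Im_ser emb a l)" unfolding av_summable_def using Im_sums[OF ld] by blast
  show "Ref emb av a l \<in> Kc emb av" by (rule Ref_Kc[OF l])
  show "Imf emb av ii a l \<in> Kc emb av" by (rule Imf_Kc[OF l])
next
  have "(\<lambda>k. psi (d k)) = (\<lambda>k. fK emb av a (d k))" using psi_eq by auto
  then show "mat_av_sums av (\<lambda>m. smat (emb (a m)) (mpow (mapM emb M) m))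
           (smat (fK emb av a 0) (A0mat emb ii M)
            + (\<Sum>g\<in>Gam emb M. smat (fK emb av a g) (Amat emb M g))
            - (\<Sum>l\<in>Lam emb ii M. smat (Ref emb av a l) (Bmat emb ii M l ** Bmat emb ii M l))
            + (\<Sum>l\<in>Lam emb ii M. smat (Imf emb av ii a l) (Bmat emb ii M l)))"
    unfolding RHS_eq using series_sums by simp
qed

end


theorem proposition6p2:
  fixes emb :: "'k::linordered_field \<Rightarrow> 'a::alg_closed_field"
    and av :: "'a \<Rightarrow> real"
    and ii :: 'a
    and a :: "nat \<Rightarrow> 'k"
    and M :: "'k^'n^'n"
  assumes K_oqc: "ord_quad_closed TYPE('k)"
    and emb: "is_field_emb emb"
    and av: "is_absval av"
    and complete: "av_complete av"
    and ii: "ii * ii = -1"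
    and M_Omega: "M \<in> Omega_hat emb av a"
    and M_nz: "M \<noteq> 0"
    and M_ss: "semisimple emb M"
    and M_split: "splitting_bound_le M 2"
  shows "(\<forall>g \<in> insert 0 (Gam emb M).
            av_summable av (\<lambda>m. emb (a m) * g ^ m) \<and> fK emb av a g \<in> Kc emb av)
       \<and> (\<forall>l \<in> Lam emb ii M.
            av_summable av (Re_ser emb a l) \<and> Ref emb av a l \<in> Kc emb av
          \<and> av_summable av (Im_ser emb a l) \<and> Imf emb av ii a l \<in> Kc emb av)
       \<and> mat_av_sums av (\<lambda>m. smat (emb (a m)) (mpow (mapM emb M) m))
           (smat (fK emb av a 0) (A0mat emb ii M)
            + (\<Sum>g\<in>Gam emb M. smat (fK emb av a g) (Amat emb M g))
            - (\<Sum>l\<in>Lam emb ii M. smat (Ref emb av a l) (Bmat emb ii M l ** Bmat emb ii M l))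
            + (\<Sum>l\<in>Lam emb ii M. smat (Imf emb av ii a l) (Bmat emb ii M l)))"
proof -
  obtain P :: "'a^'n^'n" where Pinv: "invertible P"
    and Dd: "diagonal_mat (matrix_inv P ** mapM emb M ** P)"
    using M_ss unfolding semisimple_def by blast
  define Q where "Q = matrix_inv P"
  obtain P' where P': "P ** P' = mat 1 \<and> P' ** P = mat 1" using Pinv unfolding invertible_def by blast
  have PQQP: "P ** Q = mat 1 \<and> Q ** P = mat 1"
    unfolding Q_def matrix_inv_def by (rule someI[of _ P'], rule P')
  then have PQ: "P ** Q = mat 1" and QP: "Q ** P = mat 1" by blast+
  define d where "d = (\<lambda>k. (Q ** mapM emb M ** P) $ k $ k)"
  have Ddg: "Q ** mapM emb M ** P = dg d"
    using Dd unfolding diagonal_mat_def Q_def[symmetric] by (simp add: vec_eq_iff dg_nth d_def)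
  have "cj P Q (Q ** mapM emb M ** P) = (P ** Q) ** mapM emb M ** (P ** Q)"
    by (simp only: cj_def matrix_mul_assoc)
  then have A_eq: "mapM emb M = cj P Q (dg d)" using PQ by (simp add: Ddg)
  interpret ctx2 emb ii M P Q d av a
    by unfold_locales (fact emb ii K_oqc M_split PQ QP A_eq av complete M_Omega)+
  show ?thesis by (rule main)
qed


end
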